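(* Let $\mathbf{k}$ be a field, $Q$ a finite connected quiver, $\Lambda=\mathbf{k}Q/\mathcal{J}^2$ ($\mathcal{J}$ the arrow ideal), $n\ge2$, and assume $\mathcal{C}\subseteq\operatorname{mod}\Lambda$ is an $n$-cluster tilting subcategory. (a) If $w_1\to v\leftarrow w_2$ is a subquiver of $Q$ (two distinct arrows ending at $v$), then $\delta^+(w_1)=\delta^+(w_2)=1$. (b) If $u_1\leftarrow v\to u_2$ is a subquiver of $Q$ (two distinct arrows starting at $v$), then $\delta^-(u_1)=\delta^-(u_2)=1$.
   Context: Modules are finite-dimensional right modules. $\mathcal{C}$ is $n$-cluster tilting if it is functorially finite and $\mathcal{C}=\{X\mid \operatorname{Ext}^i(X,\mathcal{C})=0\ \forall 0<i<n\}=\{X\mid\operatorname{Ext}^i(\mathcal{C},X)=0\ \forall 0<i<n\}$. $\delta^-(v)$, $\delta^+(v)$ are the numbers of arrows ending, resp. starting, at $v$. *)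

theory Defs
  imports "Jordan_Normal_Form.Matrix"
begin

record ('v, 'a) quiver =
  verts :: "'v set"
  arrs  :: "'a set"
  src   :: "'a \<Rightarrow> 'v"
  tgt   :: "'a \<Rightarrow> 'v"

definition finite_quiver :: "('v, 'a) quiver \<Rightarrow> bool" where
  "finite_quiver Q \<longleftrightarrow> finite (verts Q) \<and> finite (arrs Q) \<and>
     (\<forall>\<alpha>\<in>arrs Q. src Q \<alpha> \<in> verts Q \<and> tgt Q \<alpha> \<in> verts Q)"

definition connected_quiver :: "('v, 'a) quiver \<Rightarrow> bool" where
  "connected_quiver Q \<longleftrightarrow> verts Q \<noteq> {} \<and>
     (let E = {(src Q \<alpha>, tgt Q \<alpha>) | \<alpha>. \<alpha> \<in> arrs Q}
      in \<forall>u\<in>verts Q. \<forall>w\<in>verts Q. (u, w) \<in> (E \<union> E\<inverse>)\<^sup>*)"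

definition out_deg :: "('v, 'a) quiver \<Rightarrow> 'v \<Rightarrow> nat" where
  "out_deg Q v = card {\<alpha>\<in>arrs Q. src Q \<alpha> = v}"

definition in_deg :: "('v, 'a) quiver \<Rightarrow> 'v \<Rightarrow> nat" where
  "in_deg Q v = card {\<alpha>\<in>arrs Q. tgt Q \<alpha> = v}"

text \<open>A representation: a dimension vector and, for each arrow, a matrix
  (linear map k^{d(src)} \<rightarrow> k^{d(tgt)}). Modules over kQ/J^2 are the
  representations in which every composite of two consecutive arrows is zero.\<close>

type_synonym ('v, 'a, 'k) rep = "('v \<Rightarrow> nat) \<times> ('a \<Rightarrow> 'k mat)"
type_synonym ('v, 'k) rmor = "'v \<Rightarrow> 'k mat"

definition is_rep :: "('v, 'a) quiver \<Rightarrow> ('v, 'a, 'k::field) rep \<Rightarrow> bool" where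
  "is_rep Q M \<longleftrightarrow>
     (\<forall>v. v \<notin> verts Q \<longrightarrow> fst M v = 0) \<and>
     (\<forall>\<alpha>\<in>arrs Q. snd M \<alpha> \<in> carrier_mat (fst M (tgt Q \<alpha>)) (fst M (src Q \<alpha>))) \<and>
     (\<forall>\<alpha>\<in>arrs Q. \<forall>\<beta>\<in>arrs Q. tgt Q \<alpha> = src Q \<beta> \<longrightarrow>
        snd M \<beta> * snd M \<alpha> = 0\<^sub>m (fst M (tgt Q \<beta>)) (fst M (src Q \<alpha>)))"

definition is_hom :: "('v, 'a) quiver \<Rightarrow> ('v, 'a, 'k::field) rep \<Rightarrow> ('v, 'a, 'k) rep
    \<Rightarrow> ('v, 'k) rmor \<Rightarrow> bool" where
  "is_hom Q M N g \<longleftrightarrow>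
     (\<forall>v\<in>verts Q. g v \<in> carrier_mat (fst N v) (fst M v)) \<and>
     (\<forall>\<alpha>\<in>arrs Q. g (tgt Q \<alpha>) * snd M \<alpha> = snd N \<alpha> * g (src Q \<alpha>))"

definition id_mor :: "('v, 'a, 'k::field) rep \<Rightarrow> ('v, 'k) rmor" where
  "id_mor M = (\<lambda>v. 1\<^sub>m (fst M v))"

definition zero_mor :: "('v, 'a, 'k::field) rep \<Rightarrow> ('v, 'a, 'k) rep \<Rightarrow> ('v, 'k) rmor" where
  "zero_mor M N = (\<lambda>v. 0\<^sub>m (fst N v) (fst M v))"

definition zero_rep :: "('v, 'a, 'k::field) rep" where
  "zero_rep = (\<lambda>_. 0, \<lambda>_. 0\<^sub>m 0 0)"

definition factors_as :: "('v, 'a) quiver \<Rightarrow> ('v, 'k::field) rmor \<Rightarrow> ('v, 'k) rmor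
    \<Rightarrow> ('v, 'k) rmor \<Rightarrow> bool" where
  "factors_as Q g f h \<longleftrightarrow> (\<forall>v\<in>verts Q. g v = f v * h v)"

definition lin_exact :: "'k::field mat \<Rightarrow> 'k mat \<Rightarrow> bool" where
  "lin_exact A B \<longleftrightarrow> B * A = 0\<^sub>m (dim_row B) (dim_col A) \<and>
     (\<forall>y\<in>carrier_vec (dim_col B). B *\<^sub>v y = 0\<^sub>v (dim_row B) \<longrightarrow>
        (\<exists>x\<in>carrier_vec (dim_col A). A *\<^sub>v x = y))"

text \<open>0 \<rightarrow> Ms!0 --gs!0--> Ms!1 --> ... --> Ms!(last) \<rightarrow> 0 is exact.\<close>
definition exact_seq :: "('v, 'a) quiver \<Rightarrow> ('v, 'a, 'k::field) rep list
    \<Rightarrow> ('v, 'k) rmor list \<Rightarrow> bool" where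
  "exact_seq Q Ms gs \<longleftrightarrow>
     length Ms = Suc (length gs) \<and>
     (\<forall>M\<in>set Ms. is_rep Q M) \<and>
     (\<forall>j<length gs. is_hom Q (Ms ! j) (Ms ! Suc j) (gs ! j)) \<and>
     (\<forall>v\<in>verts Q. \<forall>j<length Ms.
        lin_exact (if j = 0 then 0\<^sub>m (fst (Ms ! 0) v) 0 else (gs ! (j - 1)) v)
                  (if j = length gs then 0\<^sub>m 0 (fst (Ms ! j) v) else (gs ! j) v))"

type_synonym ('v, 'a, 'k) extension = "('v, 'a, 'k) rep list \<times> ('v, 'k) rmor list"

text \<open>An i-extension 0 \<rightarrow> Y \<rightarrow> E_1 \<rightarrow> ... \<rightarrow> E_i \<rightarrow> X \<rightarrow> 0 (middle terms Es).\<close>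
definition is_ext :: "('v, 'a) quiver \<Rightarrow> nat \<Rightarrow> ('v, 'a, 'k::field) rep \<Rightarrow> ('v, 'a, 'k) rep
    \<Rightarrow> ('v, 'a, 'k) extension \<Rightarrow> bool" where
  "is_ext Q i X Y e \<longleftrightarrow> length (fst e) = i \<and> exact_seq Q (Y # fst e @ [X]) (snd e)"

definition ext_mor :: "('v, 'a) quiver \<Rightarrow> nat \<Rightarrow> ('v, 'a, 'k::field) rep \<Rightarrow> ('v, 'a, 'k) rep
    \<Rightarrow> ('v, 'a, 'k) extension \<Rightarrow> ('v, 'a, 'k) extension \<Rightarrow> bool" where
  "ext_mor Q i X Y e e' \<longleftrightarrow> is_ext Q i X Y e \<and> is_ext Q i X Y e' \<and>
     (\<exists>hs. length hs = i \<and>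
        (\<forall>j<i. is_hom Q (fst e ! j) (fst e' ! j) (hs ! j)) \<and>
        (let H = id_mor Y # hs @ [id_mor X] in
         \<forall>j<Suc i. \<forall>v\<in>verts Q. (H ! Suc j) v * (snd e ! j) v = (snd e' ! j) v * (H ! j) v))"

definition yoneda_equiv :: "('v, 'a) quiver \<Rightarrow> nat \<Rightarrow> ('v, 'a, 'k::field) rep \<Rightarrow> ('v, 'a, 'k) rep
    \<Rightarrow> ('v, 'a, 'k) extension \<Rightarrow> ('v, 'a, 'k) extension \<Rightarrow> bool" where
  "yoneda_equiv Q i X Y = (\<lambda>e e'. ext_mor Q i X Y e e' \<or> ext_mor Q i X Y e' e)\<^sup>*\<^sup>*"

definition dsum :: "('v, 'a, 'k::field) rep \<Rightarrow> ('v, 'a, 'k) rep \<Rightarrow> ('v, 'a, 'k) rep" where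
  "dsum M N = (\<lambda>v. fst M v + fst N v,
     \<lambda>\<alpha>. four_block_mat (snd M \<alpha>) (0\<^sub>m (dim_row (snd M \<alpha>)) (dim_col (snd N \<alpha>)))
                        (0\<^sub>m (dim_row (snd N \<alpha>)) (dim_col (snd M \<alpha>))) (snd N \<alpha>))"

text \<open>The zero element of Ext^i(X,Y): for i = 1 the split sequence
  0 \<rightarrow> Y \<rightarrow> Y \<oplus> X \<rightarrow> X \<rightarrow> 0; for i \<ge> 2 the sequence
  0 \<rightarrow> Y = Y \<rightarrow> 0 \<rightarrow> ... \<rightarrow> 0 \<rightarrow> X = X \<rightarrow> 0.\<close>
definition trivial_ext :: "nat \<Rightarrow> ('v, 'a, 'k::field) rep \<Rightarrow> ('v, 'a, 'k) rep
    \<Rightarrow> ('v, 'a, 'k) extension" where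
  "trivial_ext i X Y =
     (if i = 1 then
        ([dsum Y X],
         [\<lambda>v. mat (fst Y v + fst X v) (fst Y v) (\<lambda>(a, b). if a = b then 1 else 0),
          \<lambda>v. mat (fst X v) (fst Y v + fst X v) (\<lambda>(a, b). if b = a + fst Y v then 1 else 0)])
      else
        (let Ms = Y # replicate (i - 2) zero_rep @ [X] in
         (Ms, id_mor Y # map (\<lambda>j. zero_mor (Ms ! j) (Ms ! Suc j)) [0..<i - 1] @ [id_mor X])))"

definition ext_vanishes :: "('v, 'a) quiver \<Rightarrow> nat \<Rightarrow> ('v, 'a, 'k::field) rep
    \<Rightarrow> ('v, 'a, 'k) rep \<Rightarrow> bool" where
  "ext_vanishes Q i X Y \<longleftrightarrow>
     (\<forall>e. is_ext Q i X Y e \<longrightarrow> yoneda_equiv Q i X Y e (trivial_ext i X Y))"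

definition right_approx :: "('v, 'a) quiver \<Rightarrow> (('v, 'a, 'k::field) rep \<Rightarrow> bool)
    \<Rightarrow> ('v, 'a, 'k) rep \<Rightarrow> bool" where
  "right_approx Q \<C> M \<longleftrightarrow> (\<exists>C0 f. \<C> C0 \<and> is_hom Q C0 M f \<and>
     (\<forall>C1 g. \<C> C1 \<and> is_hom Q C1 M g \<longrightarrow> (\<exists>h. is_hom Q C1 C0 h \<and> factors_as Q g f h)))"

definition left_approx :: "('v, 'a) quiver \<Rightarrow> (('v, 'a, 'k::field) rep \<Rightarrow> bool)
    \<Rightarrow> ('v, 'a, 'k) rep \<Rightarrow> bool" where
  "left_approx Q \<C> M \<longleftrightarrow> (\<exists>C0 f. \<C> C0 \<and> is_hom Q M C0 f \<and>
     (\<forall>C1 g. \<C> C1 \<and> is_hom Q M C1 g \<longrightarrow> (\<exists>h. is_hom Q C0 C1 h \<and> factors_as Q g h f)))"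

definition functorially_finite :: "('v, 'a) quiver \<Rightarrow> (('v, 'a, 'k::field) rep \<Rightarrow> bool) \<Rightarrow> bool" where
  "functorially_finite Q \<C> \<longleftrightarrow>
     (\<forall>M. is_rep Q M \<longrightarrow> right_approx Q \<C> M \<and> left_approx Q \<C> M)"

definition n_cluster_tilting :: "('v, 'a) quiver \<Rightarrow> nat \<Rightarrow> (('v, 'a, 'k::field) rep \<Rightarrow> bool) \<Rightarrow> bool" where
  "n_cluster_tilting Q n \<C> \<longleftrightarrow>
     (\<forall>X. \<C> X \<longrightarrow> is_rep Q X) \<and>
     functorially_finite Q \<C> \<and>
     (\<forall>X. is_rep Q X \<longrightarrow>
        (\<C> X \<longleftrightarrow> (\<forall>i. 0 < i \<and> i < n \<longrightarrow> (\<forall>C. \<C> C \<longrightarrow> ext_vanishes Q i X C)))) \<and>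
     (\<forall>X. is_rep Q X \<longrightarrow>
        (\<C> X \<longleftrightarrow> (\<forall>i. 0 < i \<and> i < n \<longrightarrow> (\<forall>C. \<C> C \<longrightarrow> ext_vanishes Q i C X))))"

end

theory Submission
  imports Defs "HOL-Library.Function_Algebras"
begin

definition fsc :: "'k::field \<Rightarrow> (nat \<Rightarrow> 'k) \<Rightarrow> (nat \<Rightarrow> 'k)" where
  "fsc c f = (\<lambda>i. c * f i)"

lemma sum_app: "(sum f A) (x::'b) = sum (\<lambda>i. (f i :: 'b \<Rightarrow> 'c::comm_monoid_add) x) A"
  by (induction A rule: infinite_finite_induct) auto

lemma vs_fsc: "vector_space (fsc :: 'k::field \<Rightarrow> _)"
  by unfold_locales (auto simp: fsc_def fun_eq_iff algebra_simps)

lemma vsp_fsc: "vector_space_pair (fsc :: 'k::field \<Rightarrow> _) fsc"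
  by (simp add: vector_space_pair_def vs_fsc)

lemma left_inverse_mat:
  fixes A :: "'k::field mat"
  assumes A: "A \<in> carrier_mat n m"
    and inj: "\<And>x. x \<in> carrier_vec m \<Longrightarrow> A *\<^sub>v x = 0\<^sub>v n \<Longrightarrow> x = 0\<^sub>v m"
  shows "\<exists>L. L \<in> carrier_mat m n \<and> L * A = 1\<^sub>m m"
proof -
  interpret vs: vector_space "fsc :: 'k \<Rightarrow> _" by (rule vs_fsc)
  interpret vp: vector_space_pair "fsc :: 'k \<Rightarrow> _" fsc by (rule vsp_fsc)
  define f where "f = (\<lambda>x::nat\<Rightarrow>'k. \<lambda>i. if i < n then (\<Sum>j<m. A $$ (i,j) * x j) else 0)"
  define V where "V = {x::nat\<Rightarrow>'k. \<forall>j\<ge>m. x j = 0}"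
  have lf: "Vector_Spaces.linear fsc fsc f"
    by unfold_locales (auto simp: f_def fsc_def fun_eq_iff algebra_simps sum.distrib sum_distrib_left)
  have sV: "vs.subspace V"
    unfolding vs.subspace_def V_def by (auto simp: fsc_def)
  have injf: "inj_on f V"
  proof (rule inj_onI)
    fix x y assume x: "x \<in> V" and y: "y \<in> V" and e: "f x = f y"
    define z where "z = vec m (\<lambda>j. x j - y j)"
    have zc: "z \<in> carrier_vec m" by (simp add: z_def)
    have "A *\<^sub>v z = 0\<^sub>v n"
    proof (rule eq_vecI)
      fix i assume "i < dim_vec (0\<^sub>v n :: 'k vec)"
      hence i: "i < n" by simp
      have "f x i = f y i" using e by simp
      hence "(\<Sum>j<m. A $$ (i,j) * x j) = (\<Sum>j<m. A $$ (i,j) * y j)" using i by (simp add: f_def)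
      hence "(\<Sum>j<m. A $$ (i,j) * (x j - y j)) = 0"
        by (simp add: algebra_simps sum_subtractf)
      moreover have "(A *\<^sub>v z) $ i = (\<Sum>j<m. A $$ (i,j) * (x j - y j))"
        using A i by (simp add: z_def scalar_prod_def row_def lessThan_atLeast0)
      ultimately show "(A *\<^sub>v z) $ i = 0\<^sub>v n $ i" using i by simp
    qed (use A in simp)
    hence "z = 0\<^sub>v m" using inj zc by blast
    hence "\<forall>j<m. x j = y j" by (auto simp: z_def vec_eq_iff)
    thus "x = y" using x y by (auto simp: V_def fun_eq_iff) (metis not_le)
  qed
  obtain g where gV: "g ` UNIV \<subseteq> V" and lg: "Vector_Spaces.linear fsc fsc g" and gf: "\<forall>v\<in>V. g (f v) = v"
    using vp.linear_exists_left_inverse_on[OF lf sV injf] by blast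
  define d where "d = (\<lambda>i::nat. \<lambda>k::nat. if k = i then (1::'k) else 0)"
  define L where "L = mat m n (\<lambda>(j,i). g (d i) j)"
  have "L * A = 1\<^sub>m m"
  proof (rule eq_matI)
    fix j k assume j: "j < dim_row (1\<^sub>m m :: 'k mat)" and k: "k < dim_col (1\<^sub>m m :: 'k mat)"
    hence j: "j < m" and k: "k < m" by auto
    have fd: "f (d k) = (\<Sum>i<n. fsc (A $$ (i,k)) (d i))"
    proof -
      have "{..<m} \<inter> {k} = {k}" using k by auto
      thus ?thesis by (auto simp: f_def d_def fun_eq_iff fsc_def sum_app if_distrib sum.If_cases)
    qed
    have "(L * A) $$ (j,k) = (\<Sum>i<n. g (d i) j * A $$ (i,k))"
      using A j k by (simp add: L_def scalar_prod_def row_def col_def lessThan_atLeast0)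
    also have "\<dots> = (\<Sum>i<n. fsc (A $$ (i,k)) (g (d i))) j"
      by (simp add: sum_app fsc_def mult.commute)
    also have "\<dots> = g (\<Sum>i<n. fsc (A $$ (i,k)) (d i)) j"
    proof -
      interpret lg: Vector_Spaces.linear fsc fsc g by (rule lg)
      show ?thesis by (simp add: lg.sum lg.scale sum_app)
    qed
    also have "\<dots> = g (f (d k)) j" by (simp add: fd)
    also have "\<dots> = d k j" using gf k by (auto simp: V_def d_def)
    finally show "(L * A) $$ (j,k) = 1\<^sub>m m $$ (j,k)" using j k by (simp add: d_def)
  qed (use A in \<open>auto simp: L_def\<close>)
  thus ?thesis by (intro exI[of _ L]) (auto simp: L_def)
qed


lemma zero_mat_mult_vec[simp]: "x \<in> carrier_vec n \<Longrightarrow> 0\<^sub>m m n *\<^sub>v x = 0\<^sub>v m"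
  by (intro eq_vecI) (auto simp: scalar_prod_def)

lemma mat_mult_zero_vec[simp]: "A \<in> carrier_mat m n \<Longrightarrow> A *\<^sub>v 0\<^sub>v n = 0\<^sub>v m"
  by (intro eq_vecI) (auto simp: scalar_prod_def)

lemma lin_exact_D:
  assumes "lin_exact A B" "A \<in> carrier_mat m n" "B \<in> carrier_mat p m"
  shows "B * A = 0\<^sub>m p n"
    "\<And>y. y \<in> carrier_vec m \<Longrightarrow> B *\<^sub>v y = 0\<^sub>v p \<Longrightarrow> \<exists>x\<in>carrier_vec n. A *\<^sub>v x = y"
  using assms unfolding lin_exact_def by auto

lemma lin_exact_first:
  assumes "lin_exact (0\<^sub>m m 0) B" "B \<in> carrier_mat p m" "y \<in> carrier_vec m" "B *\<^sub>v y = 0\<^sub>v p"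
  shows "y = 0\<^sub>v m"
proof -
  obtain x where "x \<in> carrier_vec 0" "0\<^sub>m m 0 *\<^sub>v x = y"
    using lin_exact_D(2)[OF assms(1) _ assms(2), of 0] assms(3,4) by auto
  thus ?thesis by auto
qed

lemma lin_exact_last:
  assumes "lin_exact A (0\<^sub>m 0 m)" "A \<in> carrier_mat m n" "y \<in> carrier_vec m"
  shows "\<exists>x\<in>carrier_vec n. A *\<^sub>v x = y"
proof -
  have "0\<^sub>m 0 m *\<^sub>v y = 0\<^sub>v 0" using assms(3) by simp
  thus ?thesis using lin_exact_D(2)[OF assms(1) assms(2), of 0] assms(3) by auto
qed

lemma is_ext_D:
  assumes "is_ext Q i X Y e"
  shows "length (fst e) = i" "length (snd e) = Suc i"
    "is_rep Q X" "is_rep Q Y" "\<And>j. j < i \<Longrightarrow> is_rep Q (fst e ! j)"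
    "\<And>j. j < Suc i \<Longrightarrow> is_hom Q ((Y # fst e @ [X]) ! j) ((Y # fst e @ [X]) ! Suc j) (snd e ! j)"
    "\<And>v j. v \<in> verts Q \<Longrightarrow> 0 < j \<Longrightarrow> j \<le> i \<Longrightarrow> lin_exact ((snd e ! (j - 1)) v) ((snd e ! j) v)"
    "\<And>v. v \<in> verts Q \<Longrightarrow> lin_exact (0\<^sub>m (fst Y v) 0) ((snd e ! 0) v)"
    "\<And>v. v \<in> verts Q \<Longrightarrow> lin_exact ((snd e ! i) v) (0\<^sub>m 0 (fst X v))"
proof -
  have L: "length (fst e) = i" and ex: "exact_seq Q (Y # fst e @ [X]) (snd e)"
    using assms unfolding is_ext_def by auto
  note ex' = ex[unfolded exact_seq_def]
  show "length (fst e) = i" by fact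
  show Lg: "length (snd e) = Suc i" using ex' L by simp
  show "is_rep Q X" "is_rep Q Y" using ex' by auto
  show "\<And>j. j < i \<Longrightarrow> is_rep Q (fst e ! j)" using ex' L by auto
  show "\<And>j. j < Suc i \<Longrightarrow> is_hom Q ((Y # fst e @ [X]) ! j) ((Y # fst e @ [X]) ! Suc j) (snd e ! j)"
    using ex' Lg by auto
  show "\<And>v j. v \<in> verts Q \<Longrightarrow> 0 < j \<Longrightarrow> j \<le> i \<Longrightarrow> lin_exact ((snd e ! (j - 1)) v) ((snd e ! j) v)"
  proof -
    fix v j assume v: "v \<in> verts Q" and j: "0 < j" "j \<le> i"
    have "j < length (Y # fst e @ [X])" using L j by simp
    with ex' v have "lin_exact (if j = 0 then 0\<^sub>m (fst ((Y # fst e @ [X]) ! 0) v) 0 else (snd e ! (j - 1)) v)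
                  (if j = length (snd e) then 0\<^sub>m 0 (fst ((Y # fst e @ [X]) ! j) v) else (snd e ! j) v)"
      by blast
    thus "lin_exact ((snd e ! (j - 1)) v) ((snd e ! j) v)" using j Lg by simp
  qed
  show "\<And>v. v \<in> verts Q \<Longrightarrow> lin_exact (0\<^sub>m (fst Y v) 0) ((snd e ! 0) v)"
  proof -
    fix v assume v: "v \<in> verts Q"
    have "0 < length (Y # fst e @ [X])" by simp
    with ex' v have "lin_exact (if (0::nat) = 0 then 0\<^sub>m (fst ((Y # fst e @ [X]) ! 0) v) 0 else (snd e ! (0 - 1)) v)
                  (if 0 = length (snd e) then 0\<^sub>m 0 (fst ((Y # fst e @ [X]) ! 0) v) else (snd e ! 0) v)"
      by blast
    thus "lin_exact (0\<^sub>m (fst Y v) 0) ((snd e ! 0) v)" using Lg by simp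
  qed
  show "\<And>v. v \<in> verts Q \<Longrightarrow> lin_exact ((snd e ! i) v) (0\<^sub>m 0 (fst X v))"
  proof -
    fix v assume v: "v \<in> verts Q"
    have "Suc i < length (Y # fst e @ [X])" using L by simp
    with ex' v have "lin_exact (if Suc i = 0 then 0\<^sub>m (fst ((Y # fst e @ [X]) ! 0) v) 0 else (snd e ! (Suc i - 1)) v)
                  (if Suc i = length (snd e) then 0\<^sub>m 0 (fst ((Y # fst e @ [X]) ! Suc i) v) else (snd e ! Suc i) v)"
      by blast
    thus "lin_exact ((snd e ! i) v) (0\<^sub>m 0 (fst X v))" using Lg L by (simp add: nth_append)
  qed
qed

lemma is_ext_I:
  assumes L: "length (fst e) = i" "length (snd e) = Suc i"
    and reps: "is_rep Q X" "is_rep Q Y" "\<And>j. j < i \<Longrightarrow> is_rep Q (fst e ! j)"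
    and homs: "\<And>j. j < Suc i \<Longrightarrow> is_hom Q ((Y # fst e @ [X]) ! j) ((Y # fst e @ [X]) ! Suc j) (snd e ! j)"
    and mid: "\<And>v j. v \<in> verts Q \<Longrightarrow> 0 < j \<Longrightarrow> j \<le> i \<Longrightarrow> lin_exact ((snd e ! (j - 1)) v) ((snd e ! j) v)"
    and first: "\<And>v. v \<in> verts Q \<Longrightarrow> lin_exact (0\<^sub>m (fst Y v) 0) ((snd e ! 0) v)"
    and last: "\<And>v. v \<in> verts Q \<Longrightarrow> lin_exact ((snd e ! i) v) (0\<^sub>m 0 (fst X v))"
  shows "is_ext Q i X Y e"
  unfolding is_ext_def exact_seq_def
proof (intro conjI ballI allI impI)
  show "length (fst e) = i" by fact
  show "length (Y # fst e @ [X]) = Suc (length (snd e))" using L by simp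
  show "M \<in> set (Y # fst e @ [X]) \<Longrightarrow> is_rep Q M" for M
    using reps L by (auto simp: in_set_conv_nth)
  show "j < length (snd e) \<Longrightarrow> is_hom Q ((Y # fst e @ [X]) ! j) ((Y # fst e @ [X]) ! Suc j) (snd e ! j)" for j
    using homs L by simp
  fix v j assume v: "v \<in> verts Q" and j: "j < length (Y # fst e @ [X])"
  show "lin_exact (if j = 0 then 0\<^sub>m (fst ((Y # fst e @ [X]) ! 0) v) 0 else (snd e ! (j - 1)) v)
                  (if j = length (snd e) then 0\<^sub>m 0 (fst ((Y # fst e @ [X]) ! j) v) else (snd e ! j) v)"
  proof (cases "j = 0")
    case True thus ?thesis using first[OF v] L by simp
  next
    case False
    show ?thesis
    proof (cases "j = Suc i")
      case True thus ?thesis using last[OF v] L False by (simp add: nth_append)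
    next
      case F2: False
      hence "j \<le> i" using j L by simp
      thus ?thesis using mid[OF v] False F2 L by simp
    qed
  qed
qed


lemma lin_exact_zero_id: "lin_exact (0\<^sub>m m k :: 'k::field mat) (1\<^sub>m m)"
  unfolding lin_exact_def
proof (intro conjI ballI impI)
  fix y :: "'k vec" assume "y \<in> carrier_vec (dim_col (1\<^sub>m m :: 'k mat))" "1\<^sub>m m *\<^sub>v y = 0\<^sub>v (dim_row (1\<^sub>m m :: 'k mat))"
  thus "\<exists>x\<in>carrier_vec (dim_col (0\<^sub>m m k :: 'k mat)). 0\<^sub>m m k *\<^sub>v x = y"
    by (intro bexI[of _ "0\<^sub>v k"]) auto
qed auto

lemma lin_exact_id_zero: "lin_exact (1\<^sub>m n :: 'k::field mat) (0\<^sub>m m n)"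
  unfolding lin_exact_def
  by (auto intro!: bexI)

lemma lin_exact_zero_zero: "lin_exact (0\<^sub>m 0 a :: 'k::field mat) (0\<^sub>m b 0)"
  unfolding lin_exact_def
proof (intro conjI ballI impI)
  fix y :: "'k vec" assume "y \<in> carrier_vec (dim_col (0\<^sub>m b 0 :: 'k mat))"
  thus "\<exists>x\<in>carrier_vec (dim_col (0\<^sub>m 0 a :: 'k mat)). 0\<^sub>m 0 a *\<^sub>v x = y"
    by (intro bexI[of _ "0\<^sub>v a"]) auto
qed auto

lemma is_rep_carrier: "is_rep Q M \<Longrightarrow> \<alpha> \<in> arrs Q \<Longrightarrow> snd M \<alpha> \<in> carrier_mat (fst M (tgt Q \<alpha>)) (fst M (src Q \<alpha>))"
  unfolding is_rep_def by auto

lemma is_hom_id: "is_rep Q M \<Longrightarrow> is_hom Q M M (id_mor M)"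
  unfolding is_hom_def id_mor_def
  by (auto dest: is_rep_carrier)

lemma is_hom_zero: "is_rep Q M \<Longrightarrow> is_rep Q N \<Longrightarrow> is_hom Q M N (zero_mor M N)"
  unfolding is_hom_def zero_mor_def
  by (auto dest!: is_rep_carrier)

lemma is_rep_zero: "is_rep Q (zero_rep :: ('v,'a,'k::field) rep)"
  unfolding is_rep_def zero_rep_def by auto

lemma triv_len:
  fixes X Y :: "('v,'a,'k::field) rep"
  assumes "i \<ge> 2"
  shows "length (fst (trivial_ext i X Y)) = i" "length (snd (trivial_ext i X Y)) = Suc i"
  using assms unfolding trivial_ext_def Let_def by auto

lemma triv_fst:
  fixes X Y :: "('v,'a,'k::field) rep"
  assumes "i \<ge> 2" "j < i"
  shows "fst (trivial_ext i X Y) ! j = (if j = 0 then Y else if j = i - 1 then X else zero_rep)"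
  using assms unfolding trivial_ext_def Let_def
  by (auto simp: nth_append nth_Cons' )

lemma triv_full:
  fixes X Y :: "('v,'a,'k::field) rep"
  assumes "i \<ge> 2" "j \<le> Suc i"
  shows "(Y # fst (trivial_ext i X Y) @ [X]) ! j = (if j \<le> 1 then Y else if j \<ge> i then X else zero_rep)"
proof -
  have L: "length (fst (trivial_ext i X Y)) = i" by (rule triv_len(1)[OF assms(1)])
  show ?thesis
  proof (cases j)
    case 0 thus ?thesis by simp
  next
    case (Suc j')
    show ?thesis
    proof (cases "j' < i")
      case True
      thus ?thesis using Suc triv_fst[OF assms(1) True, where X=X and Y=Y] L assms by (auto simp: nth_append)
    next
      case False
      hence "j' = i" using Suc assms by simp
      thus ?thesis using Suc L assms by (auto simp: nth_append)
    qed
  qed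
qed

lemma triv_snd:
  fixes X Y :: "('v,'a,'k::field) rep"
  assumes "i \<ge> 2" "j \<le> i"
  shows "snd (trivial_ext i X Y) ! j = (if j = 0 then id_mor Y else if j = i then id_mor X
     else zero_mor ((Y # fst (trivial_ext i X Y) @ [X]) ! j) ((Y # fst (trivial_ext i X Y) @ [X]) ! Suc j))"
proof -
  define Ms where "Ms = Y # replicate (i - 2) zero_rep @ [X]"
  have T: "trivial_ext i X Y = (Ms, id_mor Y # map (\<lambda>j. zero_mor (Ms ! j) (Ms ! Suc j)) [0..<i - 1] @ [id_mor X])"
    using assms unfolding trivial_ext_def Let_def Ms_def by auto
  show ?thesis
  proof (cases j)
    case 0 thus ?thesis by (simp add: T)
  next
    case (Suc j')
    show ?thesis
    proof (cases "j = i")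
      case True thus ?thesis using Suc assms by (simp add: T nth_append)
    next
      case False
      hence "j' < i - 1" using Suc assms by simp
      moreover have "length Ms = i" using assms by (simp add: Ms_def)
      ultimately show ?thesis using Suc False assms by (simp add: T nth_append)
    qed
  qed
qed

lemma triv_is_ext:
  fixes X Y :: "('v,'a,'k::field) rep"
  assumes i: "i \<ge> 2" and X: "is_rep Q X" and Y: "is_rep Q Y"
  shows "is_ext Q i X Y (trivial_ext i X Y)"
proof (rule is_ext_I)
  let ?F = "Y # fst (trivial_ext i X Y) @ [X]"
  show "length (fst (trivial_ext i X Y)) = i" "length (snd (trivial_ext i X Y)) = Suc i"
    by (rule triv_len[OF i])+
  show "is_rep Q X" "is_rep Q Y" by fact+
  show "is_rep Q (fst (trivial_ext i X Y) ! j)" if "j < i" for j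
    using triv_fst[OF i that, where X=X and Y=Y] X Y is_rep_zero by auto
  show "is_hom Q (?F ! j) (?F ! Suc j) (snd (trivial_ext i X Y) ! j)" if j: "j < Suc i" for j
  proof -
    have r: "is_rep Q (?F ! k)" if "k \<le> Suc i" for k
      using triv_full[OF i that, where X=X and Y=Y] X Y is_rep_zero by auto
    show ?thesis
    proof (cases "j = 0")
      case True thus ?thesis using triv_snd[OF i, of 0, where X=X and Y=Y] triv_full[OF i, of 1, where X=X and Y=Y] triv_full[OF i, of 0, where X=X and Y=Y] is_hom_id[OF Y] i
        by simp
    next
      case False
      show ?thesis
      proof (cases "j = i")
        case True thus ?thesis using triv_snd[OF i, of i, where X=X and Y=Y] triv_full[OF i, of i, where X=X and Y=Y] triv_full[OF i, of "Suc i", where X=X and Y=Y] is_hom_id[OF X] i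
          by simp
      next
        case F2: False
        thus ?thesis using triv_snd[OF i, of j, where X=X and Y=Y] False j is_hom_zero[OF r r, of j "Suc j"] by simp
      qed
    qed
  qed
  show "lin_exact ((snd (trivial_ext i X Y) ! (j - 1)) v) ((snd (trivial_ext i X Y) ! j) v)"
    if v: "v \<in> verts Q" and j: "0 < j" "j \<le> i" for v j
  proof -
    consider "j = 1" | "1 < j" "j < i" | "1 < j" "j = i" using j by linarith
    thus ?thesis
    proof cases
      case 1
      thus ?thesis using triv_snd[OF i, of 0, where X=X and Y=Y] triv_snd[OF i, of 1, where X=X and Y=Y] i triv_full[OF i, of 1, where X=X and Y=Y]
        by (simp add: id_mor_def zero_mor_def lin_exact_id_zero)
    next
      case 2
      thus ?thesis using triv_snd[OF i, of "j - 1", where X=X and Y=Y] triv_snd[OF i, of j, where X=X and Y=Y] i triv_full[OF i, of j, where X=X and Y=Y]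
        by (auto simp add: id_mor_def zero_mor_def zero_rep_def lin_exact_zero_zero)
    next
      case 3
      thus ?thesis using triv_snd[OF i, of "j - 1", where X=X and Y=Y] triv_snd[OF i, of j, where X=X and Y=Y] i triv_full[OF i, of i, where X=X and Y=Y]
        by (auto simp add: id_mor_def zero_mor_def lin_exact_zero_id)
    qed
  qed
  show "lin_exact (0\<^sub>m (fst Y v) 0) ((snd (trivial_ext i X Y) ! 0) v)" for v
    using triv_snd[OF i, of 0, where X=X and Y=Y] by (simp add: id_mor_def lin_exact_zero_id)
  show "lin_exact ((snd (trivial_ext i X Y) ! i) v) (0\<^sub>m 0 (fst X v))" for v
    using triv_snd[OF i, of i, where X=X and Y=Y] i by (simp add: id_mor_def lin_exact_id_zero)
qed


definition proj_like :: "('v,'a) quiver \<Rightarrow> ('v,'a,'k::field) rep \<Rightarrow> bool" where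
  "proj_like Q X \<longleftrightarrow> (\<forall>E p. is_rep Q E \<longrightarrow> is_hom Q E X p \<longrightarrow>
     (\<forall>v\<in>verts Q. \<forall>y\<in>carrier_vec (fst X v). \<exists>x\<in>carrier_vec (fst E v). p v *\<^sub>v x = y) \<longrightarrow>
     (\<exists>s. is_hom Q X E s \<and> (\<forall>v\<in>verts Q. p v * s v = 1\<^sub>m (fst X v))))"

definition inj_like :: "('v,'a) quiver \<Rightarrow> ('v,'a,'k::field) rep \<Rightarrow> bool" where
  "inj_like Q Y \<longleftrightarrow> (\<forall>E g. is_rep Q E \<longrightarrow> is_hom Q Y E g \<longrightarrow>
     (\<forall>v\<in>verts Q. \<forall>y\<in>carrier_vec (fst Y v). g v *\<^sub>v y = 0\<^sub>v (fst E v) \<longrightarrow> y = 0\<^sub>v (fst Y v)) \<longrightarrow>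
     (\<exists>r. is_hom Q E Y r \<and> (\<forall>v\<in>verts Q. r v * g v = 1\<^sub>m (fst Y v))))"

lemma hom_carrier: "is_hom Q M N g \<Longrightarrow> v \<in> verts Q \<Longrightarrow> g v \<in> carrier_mat (fst N v) (fst M v)"
  unfolding is_hom_def by auto

lemma hom_comm: "is_hom Q M N g \<Longrightarrow> b \<in> arrs Q \<Longrightarrow> g (tgt Q b) * snd M b = snd N b * g (src Q b)"
  unfolding is_hom_def by auto

lemma nth_H:
  assumes "length hs = i"
  shows "(a # hs @ [b]) ! 0 = a" "j < i \<Longrightarrow> (a # hs @ [b]) ! Suc j = hs ! j"
    "(a # hs @ [b]) ! Suc i = b"
  using assms by (auto simp: nth_append)

lemma proj_vanish_ge2:
  fixes X Y :: "('v,'a,'k::field) rep"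
  assumes P: "proj_like Q X" and i: "i \<ge> 2" and e: "is_ext Q i X Y e"
  shows "ext_mor Q i X Y (trivial_ext i X Y) e"
proof -
  note D = is_ext_D[OF e]
  define Es where "Es = fst e"
  define gs where "gs = snd e"
  define F where "F = Y # Es @ [X]"
  define Ft where "Ft = Y # fst (trivial_ext i X Y) @ [X]"
  define gt where "gt = snd (trivial_ext i X Y)"
  have LEs: "length Es = i" and Lgs: "length gs = Suc i" using D by (auto simp: Es_def gs_def)
  have FEs: "j < i \<Longrightarrow> F ! Suc j = Es ! j" for j using LEs by (simp add: F_def nth_append)
  have F0: "F ! 0 = Y" and Fl: "F ! Suc i = X" using LEs by (auto simp: F_def nth_append)
  have repE: "j < i \<Longrightarrow> is_rep Q (Es ! j)" for j using D by (simp add: Es_def)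
  have homs: "j < Suc i \<Longrightarrow> is_hom Q (F ! j) (F ! Suc j) (gs ! j)" for j
    using D(6) by (simp add: F_def gs_def Es_def)
  have pE: "is_hom Q (Es ! (i - 1)) X (gs ! i)"
    using homs[of i] FEs[of "i - 1"] Fl i by simp
  have surj: "\<forall>v\<in>verts Q. \<forall>y\<in>carrier_vec (fst X v). \<exists>x\<in>carrier_vec (fst (Es ! (i - 1)) v). (gs ! i) v *\<^sub>v x = y"
  proof (intro ballI)
    fix v and y :: "'k vec" assume v: "v \<in> verts Q" and y: "y \<in> carrier_vec (fst X v)"
    show "\<exists>x\<in>carrier_vec (fst (Es ! (i - 1)) v). (gs ! i) v *\<^sub>v x = y"
      using lin_exact_last[OF D(9)[OF v] _ y] hom_carrier[OF pE v] by (simp add: gs_def)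
  qed
  have repE1: "is_rep Q (Es ! (i - 1))" using repE[of "i - 1"] i by simp
  obtain s where s: "is_hom Q X (Es ! (i - 1)) s" and ps: "\<forall>v\<in>verts Q. (gs ! i) v * s v = 1\<^sub>m (fst X v)"
    using P[unfolded proj_like_def, rule_format, OF repE1 pE] surj by blast
  define hs where "hs = map (\<lambda>j. if j = 0 then gs ! 0 else if j = i - 1 then s else zero_mor zero_rep (Es ! j)) [0..<i]"
  have Lhs: "length hs = i" by (simp add: hs_def)
  have hsj: "j < i \<Longrightarrow> hs ! j = (if j = 0 then gs ! 0 else if j = i - 1 then s else zero_mor zero_rep (Es ! j))" for j
    by (simp add: hs_def)
  have Ftj: "j \<le> Suc i \<Longrightarrow> Ft ! j = (if j \<le> 1 then Y else if j \<ge> i then X else zero_rep)" for j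
    unfolding Ft_def by (rule triv_full[OF i])
  have gtj: "j \<le> i \<Longrightarrow> gt ! j = (if j = 0 then id_mor Y else if j = i then id_mor X
     else zero_mor (Ft ! j) (Ft ! Suc j))" for j
    unfolding gt_def Ft_def by (rule triv_snd[OF i])
  have mid0: "v \<in> verts Q \<Longrightarrow> (gs ! j) v * (gs ! (j - 1)) v = 0\<^sub>m (fst (F ! Suc j) v) (fst (F ! (j - 1)) v)"
    if "0 < j" "j \<le> i" for v j
  proof -
    assume v: "v \<in> verts Q"
    have "lin_exact ((gs ! (j - 1)) v) ((gs ! j) v)" using D(7)[OF v that] by (simp add: gs_def)
    moreover have "(gs ! (j - 1)) v \<in> carrier_mat (fst (F ! j) v) (fst (F ! (j - 1)) v)"
      using hom_carrier[OF homs[of "j - 1"] v] that by simp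
    moreover have "(gs ! j) v \<in> carrier_mat (fst (F ! Suc j) v) (fst (F ! j) v)"
      using hom_carrier[OF homs[of j] v] that by simp
    ultimately show ?thesis by (rule lin_exact_D(1))
  qed
  show ?thesis
    unfolding ext_mor_def
  proof (intro conjI exI[of _ hs])
    show "is_ext Q i X Y (trivial_ext i X Y)" using triv_is_ext[OF i D(3) D(4)] .
    show "is_ext Q i X Y e" by fact
    show "length hs = i" by fact
    show "\<forall>j<i. is_hom Q (fst (trivial_ext i X Y) ! j) (fst e ! j) (hs ! j)"
    proof (intro allI impI)
      fix j assume j: "j < i"
      have Ftj': "fst (trivial_ext i X Y) ! j = Ft ! Suc j" using j triv_len(1)[OF i, where X=X and Y=Y]
        by (simp add: Ft_def nth_append)
      show "is_hom Q (fst (trivial_ext i X Y) ! j) (fst e ! j) (hs ! j)"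
      proof (cases "j = 0")
        case True thus ?thesis using homs[of 0] Ftj' Ftj[of 1] F0 FEs[of 0] i hsj[OF j]
          by (simp add: Es_def)
      next
        case False
        show ?thesis
        proof (cases "j = i - 1")
          case True thus ?thesis using s Ftj' Ftj[of i] False hsj[OF j] i by (simp add: Es_def)
        next
          case F2: False
          have "\<not> i \<le> Suc j" using F2 j by linarith
          thus ?thesis using Ftj' Ftj[of "Suc j"] False F2 hsj[OF j] j is_hom_zero[OF is_rep_zero repE[OF j]]
            by (simp add: Es_def)
        qed
      qed
    qed
    show "let H = id_mor Y # hs @ [id_mor X] in \<forall>j<Suc i. \<forall>v\<in>verts Q.
            (H ! Suc j) v * (snd (trivial_ext i X Y) ! j) v = (snd e ! j) v * (H ! j) v"
      unfolding Let_def gt_def[symmetric] gs_def[symmetric]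
    proof (intro allI impI ballI)
      fix j v assume j: "j < Suc i" and v: "v \<in> verts Q"
      let ?H = "id_mor Y # hs @ [id_mor X]"
      have cY: "(gs ! 0) v \<in> carrier_mat (fst (Es ! 0) v) (fst Y v)"
        using hom_carrier[OF homs[of 0] v] F0 FEs[of 0] i by simp
      consider "j = 0" | "j = 1" "1 < i" | "1 < j" "j < i" | "j = i" using j i by linarith
      thus "(?H ! Suc j) v * (gt ! j) v = (gs ! j) v * (?H ! j) v"
      proof cases
        case 1 thus ?thesis using nth_H[OF Lhs] hsj[of 0] gtj[of 0] i by simp
      next
        case 2
        have "(?H ! Suc j) v \<in> carrier_mat (fst (Es ! 1) v) (fst (Ft ! 2) v)"
        proof (cases "i = 2")
          case True thus ?thesis using nth_H(2)[OF Lhs, of 1] hsj[of 1] 2 hom_carrier[OF s v] Ftj[of 2] by simp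
        next
          case False
          hence "1 \<noteq> i - 1" using i by linarith
          thus ?thesis using nth_H(2)[OF Lhs, of 1] hsj[of 1] 2 Ftj[of 2] i False
            by (simp add: zero_mor_def zero_rep_def)
        qed
        moreover have "(gs ! 1) v * (gs ! 0) v = 0\<^sub>m (fst (Es ! 1) v) (fst Y v)"
          using mid0[of 1 v] 2 v FEs[of 1] F0 by simp
        ultimately show ?thesis using 2 gtj[of 1] nth_H[OF Lhs] hsj[of 0] Ftj[of 1] i
          by (simp add: zero_mor_def numeral_2_eq_2 carrier_matD)
      next
        case 3
        have "(?H ! Suc j) v \<in> carrier_mat (fst (F ! Suc j) v) (fst (Ft ! Suc j) v)"
        proof (cases "j = i - 1")
          case True
          have a: "Ft ! Suc j = X" using Ftj[of "Suc j"] 3 True by auto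
          have b: "?H ! Suc j = s" using nth_H(2)[OF Lhs, of j] hsj[of j] 3 True by auto
          have c: "F ! Suc j = Es ! (i - 1)" using FEs[of j] 3 True by auto
          show ?thesis unfolding a b c using hom_carrier[OF s v] .
        next
          case False
          hence "\<not> i \<le> Suc j" using 3 by linarith
          thus ?thesis using nth_H(2)[OF Lhs, of j] hsj[of j] 3 False FEs[of j] Ftj[of "Suc j"]
            by (simp add: zero_mor_def zero_rep_def)
        qed
        moreover have "(gs ! j) v \<in> carrier_mat (fst (F ! Suc j) v) (fst (F ! j) v)"
          using hom_carrier[OF homs[of j] v] 3 by simp
        moreover have "j - 1 \<noteq> 0" "j - 1 \<noteq> i - 1" "j - 1 < i" "\<not> j \<le> 1" "\<not> i \<le> j" using 3 by linarith+
        ultimately show ?thesis using 3 gtj[of j] nth_H(2)[OF Lhs, of "j - 1"] hsj[of "j - 1"] Ftj[of j] FEs[of "j - 1"]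
          by (simp add: zero_mor_def zero_rep_def carrier_matD)
      next
        case 4
        have "(gs ! i) v * s v = 1\<^sub>m (fst X v)" using ps v by simp
        moreover have "s v \<in> carrier_mat (fst (Es ! (i - 1)) v) (fst X v)" using hom_carrier[OF s v] .
        ultimately show ?thesis using 4 gtj[of i] nth_H[OF Lhs] hsj[of "i - 1"] i
          by (simp add: id_mor_def)
      qed
    qed
  qed
qed

lemma inj_vanish_ge2:
  fixes X Y :: "('v,'a,'k::field) rep"
  assumes I: "inj_like Q Y" and i: "i \<ge> 2" and e: "is_ext Q i X Y e"
  shows "ext_mor Q i X Y e (trivial_ext i X Y)"
proof -
  note D = is_ext_D[OF e]
  define Es where "Es = fst e"
  define gs where "gs = snd e"
  define F where "F = Y # Es @ [X]"
  define Ft where "Ft = Y # fst (trivial_ext i X Y) @ [X]"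
  define gt where "gt = snd (trivial_ext i X Y)"
  have LEs: "length Es = i" and Lgs: "length gs = Suc i" using D by (auto simp: Es_def gs_def)
  have FEs: "j < i \<Longrightarrow> F ! Suc j = Es ! j" for j using LEs by (simp add: F_def nth_append)
  have F0: "F ! 0 = Y" and Fl: "F ! Suc i = X" using LEs by (auto simp: F_def nth_append)
  have repE: "j < i \<Longrightarrow> is_rep Q (Es ! j)" for j using D by (simp add: Es_def)
  have homs: "j < Suc i \<Longrightarrow> is_hom Q (F ! j) (F ! Suc j) (gs ! j)" for j
    using D(6) by (simp add: F_def gs_def Es_def)
  have gE: "is_hom Q Y (Es ! 0) (gs ! 0)"
    using homs[of 0] FEs[of 0] F0 i by simp
  have pE: "is_hom Q (Es ! (i - 1)) X (gs ! i)"
    using homs[of i] FEs[of "i - 1"] Fl i by simp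
  have inj: "\<forall>v\<in>verts Q. \<forall>y\<in>carrier_vec (fst Y v). (gs ! 0) v *\<^sub>v y = 0\<^sub>v (fst (Es ! 0) v) \<longrightarrow> y = 0\<^sub>v (fst Y v)"
  proof (intro ballI impI)
    fix v and y :: "'k vec" assume v: "v \<in> verts Q" and y: "y \<in> carrier_vec (fst Y v)"
      and z: "(gs ! 0) v *\<^sub>v y = 0\<^sub>v (fst (Es ! 0) v)"
    show "y = 0\<^sub>v (fst Y v)"
      using lin_exact_first[OF D(8)[OF v] _ y] hom_carrier[OF gE v] z by (simp add: gs_def)
  qed
  have repE0: "is_rep Q (Es ! 0)" using repE[of 0] i by simp
  obtain r where r: "is_hom Q (Es ! 0) Y r" and rg: "\<forall>v\<in>verts Q. r v * (gs ! 0) v = 1\<^sub>m (fst Y v)"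
    using I[unfolded inj_like_def, rule_format, OF repE0 gE] inj by blast
  define hs where "hs = map (\<lambda>j. if j = 0 then r else if j = i - 1 then gs ! i else zero_mor (Es ! j) zero_rep) [0..<i]"
  have Lhs: "length hs = i" by (simp add: hs_def)
  have hsj: "j < i \<Longrightarrow> hs ! j = (if j = 0 then r else if j = i - 1 then gs ! i else zero_mor (Es ! j) zero_rep)" for j
    by (simp add: hs_def)
  have Ftj: "j \<le> Suc i \<Longrightarrow> Ft ! j = (if j \<le> 1 then Y else if j \<ge> i then X else zero_rep)" for j
    unfolding Ft_def by (rule triv_full[OF i])
  have gtj: "j \<le> i \<Longrightarrow> gt ! j = (if j = 0 then id_mor Y else if j = i then id_mor X
     else zero_mor (Ft ! j) (Ft ! Suc j))" for j
    unfolding gt_def Ft_def by (rule triv_snd[OF i])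
  have mid0: "v \<in> verts Q \<Longrightarrow> (gs ! j) v * (gs ! (j - 1)) v = 0\<^sub>m (fst (F ! Suc j) v) (fst (F ! (j - 1)) v)"
    if "0 < j" "j \<le> i" for v j
  proof -
    assume v: "v \<in> verts Q"
    have "lin_exact ((gs ! (j - 1)) v) ((gs ! j) v)" using D(7)[OF v that] by (simp add: gs_def)
    moreover have "(gs ! (j - 1)) v \<in> carrier_mat (fst (F ! j) v) (fst (F ! (j - 1)) v)"
      using hom_carrier[OF homs[of "j - 1"] v] that by simp
    moreover have "(gs ! j) v \<in> carrier_mat (fst (F ! Suc j) v) (fst (F ! j) v)"
      using hom_carrier[OF homs[of j] v] that by simp
    ultimately show ?thesis by (rule lin_exact_D(1))
  qed
  show ?thesis
    unfolding ext_mor_def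
  proof (intro conjI exI[of _ hs])
    show "is_ext Q i X Y (trivial_ext i X Y)" using triv_is_ext[OF i D(3) D(4)] .
    show "is_ext Q i X Y e" by fact
    show "length hs = i" by fact
    show "\<forall>j<i. is_hom Q (fst e ! j) (fst (trivial_ext i X Y) ! j) (hs ! j)"
    proof (intro allI impI)
      fix j assume j: "j < i"
      have Ftj': "fst (trivial_ext i X Y) ! j = Ft ! Suc j" using j triv_len(1)[OF i, where X=X and Y=Y]
        by (simp add: Ft_def nth_append)
      show "is_hom Q (fst e ! j) (fst (trivial_ext i X Y) ! j) (hs ! j)"
      proof (cases "j = 0")
        case True thus ?thesis using r Ftj' Ftj[of 1] i hsj[OF j]
          by (simp add: Es_def)
      next
        case False
        show ?thesis
        proof (cases "j = i - 1")
          case True thus ?thesis using pE Ftj' Ftj[of i] False hsj[OF j] i by (simp add: Es_def)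
        next
          case F2: False
          have "\<not> i \<le> Suc j" using F2 j by linarith
          thus ?thesis using Ftj' Ftj[of "Suc j"] False F2 hsj[OF j] j is_hom_zero[OF repE[OF j] is_rep_zero]
            by (simp add: Es_def)
        qed
      qed
    qed
    show "let H = id_mor Y # hs @ [id_mor X] in \<forall>j<Suc i. \<forall>v\<in>verts Q.
            (H ! Suc j) v * (snd e ! j) v = (snd (trivial_ext i X Y) ! j) v * (H ! j) v"
      unfolding Let_def gt_def[symmetric] gs_def[symmetric]
    proof (intro allI impI ballI)
      fix j v assume j: "j < Suc i" and v: "v \<in> verts Q"
      let ?H = "id_mor Y # hs @ [id_mor X]"
      consider "j = 0" | "0 < j" "j < i" | "j = i" using j i by linarith
      thus "(?H ! Suc j) v * (gs ! j) v = (gt ! j) v * (?H ! j) v"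
      proof cases
        case 1
        have "r v * (gs ! 0) v = 1\<^sub>m (fst Y v)" using rg v by simp
        thus ?thesis using 1 nth_H[OF Lhs] hsj[of 0] gtj[of 0] i by (simp add: id_mor_def)
      next
        case 2
        have cHj: "(?H ! j) v \<in> carrier_mat (fst (Ft ! j) v) (fst (F ! j) v)"
        proof (cases "j = 1")
          case True thus ?thesis using nth_H(2)[OF Lhs, of 0] hsj[of 0] 2 hom_carrier[OF r v] Ftj[of 1] FEs[of 0]
            by simp
        next
          case False
          hence "j - 1 \<noteq> 0" "j - 1 \<noteq> i - 1" "\<not> j \<le> 1" "\<not> i \<le> j" "j - 1 < i" using 2 by linarith+
          thus ?thesis using nth_H(2)[OF Lhs, of "j - 1"] hsj[of "j - 1"] 2 FEs[of "j - 1"] Ftj[of j]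
            by (simp add: zero_mor_def zero_rep_def)
        qed
        have gt0: "(gt ! j) v = 0\<^sub>m (fst (Ft ! Suc j) v) (fst (Ft ! j) v)"
          using gtj[of j] 2 by (simp add: zero_mor_def)
        have lhs: "(?H ! Suc j) v * (gs ! j) v = 0\<^sub>m (fst (Ft ! Suc j) v) (fst (F ! j) v)"
        proof (cases "j = i - 1")
          case True
          have a: "?H ! Suc j = gs ! i" using nth_H(2)[OF Lhs, of j] hsj[of j] 2 True by auto
          have b: "Ft ! Suc j = X" using Ftj[of "Suc j"] 2 True by auto
          have c: "Suc j = i" "j = i - 1" using 2 True by auto
          show ?thesis unfolding a b using mid0[of i v] v i c Fl by simp
        next
          case False
          hence "\<not> i \<le> Suc j" using 2 by linarith
          moreover have "(gs ! j) v \<in> carrier_mat (fst (F ! Suc j) v) (fst (F ! j) v)"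
            using hom_carrier[OF homs[of j] v] 2 by simp
          ultimately show ?thesis using nth_H(2)[OF Lhs, of j] hsj[of j] 2 False Ftj[of "Suc j"] FEs[of j]
            by (simp add: zero_mor_def zero_rep_def carrier_matD)
        qed
        show ?thesis unfolding lhs gt0 using cHj by simp
      next
        case 3
        have "(gs ! i) v \<in> carrier_mat (fst X v) (fst (Es ! (i - 1)) v)" using hom_carrier[OF pE v] .
        thus ?thesis using 3 gtj[of i] nth_H[OF Lhs] hsj[of "i - 1"] i
          by (simp add: id_mor_def)
      qed
    qed
  qed
qed


definition iota :: "nat \<Rightarrow> nat \<Rightarrow> 'k::field mat" where
  "iota a b = mat (a + b) a (\<lambda>(r, c). if r = c then 1 else 0)"

definition proj :: "nat \<Rightarrow> nat \<Rightarrow> 'k::field mat" where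
  "proj a b = mat b (a + b) (\<lambda>(r, c). if c = r + a then 1 else 0)"

lemma iota_carrier[simp]: "iota a b \<in> carrier_mat (a + b) a" by (simp add: iota_def)
lemma proj_carrier[simp]: "proj a b \<in> carrier_mat b (a + b)" by (simp add: proj_def)
lemma iota_dims[simp]: "dim_row (iota a b) = a + b" "dim_col (iota a b) = a" by (auto simp: iota_def)
lemma proj_dims[simp]: "dim_row (proj a b) = b" "dim_col (proj a b) = a + b" by (auto simp: proj_def)

lemma col_iota: "j < a \<Longrightarrow> col (iota a b :: 'k::field mat) j = unit_vec (a + b) j"
  by (intro eq_vecI) (auto simp: iota_def unit_vec_def)

lemma row_iota: "i < a + b \<Longrightarrow> row (iota a b :: 'k::field mat) i = (if i < a then unit_vec a i else 0\<^sub>v a)"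
  by (intro eq_vecI) (auto simp: iota_def unit_vec_def)

lemma row_proj: "i < b \<Longrightarrow> row (proj a b :: 'k::field mat) i = unit_vec (a + b) (i + a)"
  by (intro eq_vecI) (auto simp: proj_def unit_vec_def)

lemma col_proj: "j < a + b \<Longrightarrow> col (proj a b :: 'k::field mat) j = (if j < a then 0\<^sub>v b else unit_vec b (j - a))"
  by (intro eq_vecI) (auto simp: proj_def unit_vec_def)

lemma mult_iota_right: "A \<in> carrier_mat n (a + b) \<Longrightarrow> i < n \<Longrightarrow> j < a \<Longrightarrow> (A * iota a b) $$ (i, j) = A $$ (i, j)"
  by (simp add: col_iota)

lemma mult_iota_left: "B \<in> carrier_mat a m \<Longrightarrow> i < a + b \<Longrightarrow> j < m \<Longrightarrow>
   (iota a b * B) $$ (i, j) = (if i < a then B $$ (i, j) else 0)"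
  by (simp add: row_iota)

lemma mult_proj_left: "A \<in> carrier_mat (a + b) m \<Longrightarrow> i < b \<Longrightarrow> j < m \<Longrightarrow>
   (proj a b * A) $$ (i, j) = A $$ (i + a, j)"
  by (simp add: row_proj)

lemma mult_proj_right: "B \<in> carrier_mat m b \<Longrightarrow> i < m \<Longrightarrow> j < a + b \<Longrightarrow>
   (B * proj a b) $$ (i, j) = (if j < a then 0 else B $$ (i, j - a))"
  by (simp add: col_proj)

lemma mult_rowblock:
  assumes M: "M \<in> carrier_mat r n" and A: "A \<in> carrier_mat n a" and B: "B \<in> carrier_mat n b"
  shows "M * four_block_mat A B (0\<^sub>m 0 a) (0\<^sub>m 0 b) = four_block_mat (M * A) (M * B) (0\<^sub>m 0 a) (0\<^sub>m 0 b)"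
proof (rule eq_matI)
  fix i j assume i: "i < dim_row (four_block_mat (M * A) (M * B) (0\<^sub>m 0 a) (0\<^sub>m 0 b))"
    and j: "j < dim_col (four_block_mat (M * A) (M * B) (0\<^sub>m 0 a) (0\<^sub>m 0 b))"
  have c: "col (four_block_mat A B (0\<^sub>m 0 a) (0\<^sub>m 0 b)) j = (if j < a then col A j else col B (j - a))"
    using A B j by (intro eq_vecI) auto
  show "(M * four_block_mat A B (0\<^sub>m 0 a) (0\<^sub>m 0 b)) $$ (i, j) = four_block_mat (M * A) (M * B) (0\<^sub>m 0 a) (0\<^sub>m 0 b) $$ (i, j)"
    using i j M A B by (simp add: c)
qed (use M A B in auto)

lemma mult_colblock:
  assumes M: "M \<in> carrier_mat n m" and A: "A \<in> carrier_mat a n" and B: "B \<in> carrier_mat b n"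
  shows "four_block_mat A (0\<^sub>m a 0) B (0\<^sub>m b 0) * M = four_block_mat (A * M) (0\<^sub>m a 0) (B * M) (0\<^sub>m b 0)"
proof (rule eq_matI)
  fix i j assume i: "i < dim_row (four_block_mat (A * M) (0\<^sub>m a 0) (B * M) (0\<^sub>m b 0))"
    and j: "j < dim_col (four_block_mat (A * M) (0\<^sub>m a 0) (B * M) (0\<^sub>m b 0))"
  have c: "row (four_block_mat A (0\<^sub>m a 0) B (0\<^sub>m b 0)) i = (if i < a then row A i else row B (i - a))"
    using A B i by (intro eq_vecI) auto
  show "(four_block_mat A (0\<^sub>m a 0) B (0\<^sub>m b 0) * M) $$ (i, j) = four_block_mat (A * M) (0\<^sub>m a 0) (B * M) (0\<^sub>m b 0) $$ (i, j)"
    using i j M A B by (simp add: c)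
qed (use M A B in auto)

lemma iota_mult_vec: "y \<in> carrier_vec a \<Longrightarrow> i < a + b \<Longrightarrow> (iota a b *\<^sub>v y) $ i = (if i < a then y $ i else (0::'k::field))"
  by (simp add: row_iota)

lemma proj_mult_vec: "y \<in> carrier_vec (a + b) \<Longrightarrow> i < b \<Longrightarrow> (proj a b *\<^sub>v y) $ i = (y $ (i + a) :: 'k::field)"
  by (simp add: row_proj)

lemma lin_exact_first_iota: "lin_exact (0\<^sub>m a 0) (iota a b :: 'k::field mat)"
  unfolding lin_exact_def
proof (intro conjI ballI impI)
  fix y :: "'k vec" assume y: "y \<in> carrier_vec (dim_col (iota a b :: 'k mat))"
    and z: "iota a b *\<^sub>v y = 0\<^sub>v (dim_row (iota a b :: 'k mat))"
  have "y = 0\<^sub>v a"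
  proof (rule eq_vecI)
    fix i assume "i < dim_vec (0\<^sub>v a :: 'k vec)"
    hence i: "i < a" by simp
    have "(iota a b *\<^sub>v y) $ i = 0" using z i by simp
    thus "y $ i = 0\<^sub>v a $ i" using iota_mult_vec[of y a i b] y i by simp
  qed (use y in simp)
  thus "\<exists>x\<in>carrier_vec (dim_col (0\<^sub>m a 0 :: 'k mat)). 0\<^sub>m a 0 *\<^sub>v x = y"
    by (intro bexI[of _ "0\<^sub>v 0"]) auto
qed (auto intro!: eq_matI)

lemma lin_exact_iota_proj: "lin_exact (iota a b) (proj a b :: 'k::field mat)"
  unfolding lin_exact_def
proof (intro conjI ballI impI)
  show "(proj a b * iota a b :: 'k mat) = 0\<^sub>m (dim_row (proj a b :: 'k mat)) (dim_col (iota a b :: 'k mat))"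
  proof (rule eq_matI)
    fix i j assume "i < dim_row (0\<^sub>m (dim_row (proj a b :: 'k mat)) (dim_col (iota a b :: 'k mat)))"
      "j < dim_col (0\<^sub>m (dim_row (proj a b :: 'k mat)) (dim_col (iota a b :: 'k mat)))"
    hence i: "i < b" and j: "j < a" by auto
    have "(proj a b * iota a b :: 'k mat) $$ (i, j) = (iota a b :: 'k mat) $$ (i + a, j)"
      by (rule mult_proj_left[OF iota_carrier i j])
    also have "\<dots> = 0" using i j by (simp add: iota_def)
    finally show "(proj a b * iota a b :: 'k mat) $$ (i, j) = 0\<^sub>m (dim_row (proj a b :: 'k mat)) (dim_col (iota a b :: 'k mat)) $$ (i, j)"
      using i j by simp
  qed auto
  fix y :: "'k vec" assume y: "y \<in> carrier_vec (dim_col (proj a b :: 'k mat))"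
    and z: "proj a b *\<^sub>v y = 0\<^sub>v (dim_row (proj a b :: 'k mat))"
  have yz: "k \<ge> a \<Longrightarrow> k < a + b \<Longrightarrow> y $ k = 0" for k
  proof -
    assume k: "k \<ge> a" "k < a + b"
    have "(proj a b *\<^sub>v y) $ (k - a) = 0" using z k by simp
    thus "y $ k = 0" using proj_mult_vec[of y a b "k - a"] y k by simp
  qed
  show "\<exists>x\<in>carrier_vec (dim_col (iota a b :: 'k mat)). iota a b *\<^sub>v x = y"
  proof (intro bexI[of _ "vec a (\<lambda>i. y $ i)"])
    show "iota a b *\<^sub>v vec a (($) y) = y"
    proof (rule eq_vecI)
      fix i assume "i < dim_vec y"
      hence i: "i < a + b" using y by simp
      show "(iota a b *\<^sub>v vec a (($) y)) $ i = y $ i"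
        using iota_mult_vec[of "vec a (($) y)" a i b] i yz[of i] by simp
    qed (use y in simp)
  qed simp
qed

lemma lin_exact_proj_last: "lin_exact (proj a b :: 'k::field mat) (0\<^sub>m 0 b)"
  unfolding lin_exact_def
proof (intro conjI ballI impI)
  fix y :: "'k vec" assume y: "y \<in> carrier_vec (dim_col (0\<^sub>m 0 b :: 'k mat))"
  show "\<exists>x\<in>carrier_vec (dim_col (proj a b :: 'k mat)). proj a b *\<^sub>v x = y"
  proof (intro bexI[of _ "vec (a + b) (\<lambda>k. if k < a then 0 else y $ (k - a))"])
    show "proj a b *\<^sub>v vec (a + b) (\<lambda>k. if k < a then 0 else y $ (k - a)) = y"
    proof (rule eq_vecI)
      fix i assume "i < dim_vec y"
      hence i: "i < b" using y by simp
      show "(proj a b *\<^sub>v vec (a + b) (\<lambda>k. if k < a then 0 else y $ (k - a))) $ i = y $ i"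
        using proj_mult_vec[of "vec (a + b) (\<lambda>k. if k < a then 0 else y $ (k - a))" a b i] i by simp
    qed (use y in simp)
  qed simp
qed (auto intro!: eq_matI)

definition tw :: "('v,'a,'k::field) rep \<Rightarrow> ('v,'a,'k) rep \<Rightarrow> ('a \<Rightarrow> 'k mat) \<Rightarrow> ('v,'a,'k) rep" where
  "tw Y X D = (\<lambda>v. fst Y v + fst X v,
     \<lambda>b. four_block_mat (snd Y b) (D b) (0\<^sub>m (dim_row (snd X b)) (dim_col (snd Y b))) (snd X b))"

definition ext1 :: "('v,'a,'k::field) rep \<Rightarrow> ('v,'a,'k) rep \<Rightarrow> ('a \<Rightarrow> 'k mat) \<Rightarrow> ('v,'a,'k) extension" where
  "ext1 Y X D = ([tw Y X D], [\<lambda>v. iota (fst Y v) (fst X v), \<lambda>v. proj (fst Y v) (fst X v)])"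

lemma triv1: "trivial_ext 1 X Y = ext1 Y X (\<lambda>b. 0\<^sub>m (dim_row (snd Y b)) (dim_col (snd X b)))"
  by (simp add: trivial_ext_def ext1_def tw_def dsum_def iota_def proj_def)

definition twist_ok :: "('v,'a) quiver \<Rightarrow> ('v,'a,'k::field) rep \<Rightarrow> ('v,'a,'k) rep \<Rightarrow> ('a \<Rightarrow> 'k mat) \<Rightarrow> bool" where
  "twist_ok Q Y X D \<longleftrightarrow> (\<forall>b\<in>arrs Q. D b \<in> carrier_mat (fst Y (tgt Q b)) (fst X (src Q b))) \<and>
     (\<forall>b\<in>arrs Q. \<forall>c\<in>arrs Q. tgt Q b = src Q c \<longrightarrow>
        snd Y c * D b + D c * snd X b = 0\<^sub>m (fst Y (tgt Q c)) (fst X (src Q b)))"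

lemma twist_ok_zero:
  assumes Y: "is_rep Q Y" and X: "is_rep Q X"
  shows "twist_ok Q Y X (\<lambda>b. 0\<^sub>m (dim_row (snd Y b)) (dim_col (snd X b)))"
  unfolding twist_ok_def
proof (intro conjI ballI impI)
  fix b assume b: "b \<in> arrs Q"
  show "0\<^sub>m (dim_row (snd Y b)) (dim_col (snd X b)) \<in> carrier_mat (fst Y (tgt Q b)) (fst X (src Q b))"
    using is_rep_carrier[OF Y b] is_rep_carrier[OF X b] by auto
next
  fix b c assume b: "b \<in> arrs Q" and c: "c \<in> arrs Q" and bc: "tgt Q b = src Q c"
  show "snd Y c * 0\<^sub>m (dim_row (snd Y b)) (dim_col (snd X b)) + 0\<^sub>m (dim_row (snd Y c)) (dim_col (snd X c)) * snd X b =
          0\<^sub>m (fst Y (tgt Q c)) (fst X (src Q b))"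
    using is_rep_carrier[OF Y b] is_rep_carrier[OF X b] is_rep_carrier[OF Y c] is_rep_carrier[OF X c] bc by auto
qed

lemma tw_rep:
  fixes X Y :: "('v,'a,'k::field) rep"
  assumes Y: "is_rep Q Y" and X: "is_rep Q X" and D: "twist_ok Q Y X D"
  shows "is_rep Q (tw Y X D)"
  unfolding is_rep_def
proof (intro conjI allI impI ballI)
  fix v assume "v \<notin> verts Q" thus "fst (tw Y X D) v = 0" using X Y by (simp add: tw_def is_rep_def)
next
  fix b assume b: "b \<in> arrs Q"
  show "snd (tw Y X D) b \<in> carrier_mat (fst (tw Y X D) (tgt Q b)) (fst (tw Y X D) (src Q b))"
    using is_rep_carrier[OF Y b] is_rep_carrier[OF X b] by (simp add: tw_def)
next
  fix b c assume b: "b \<in> arrs Q" and c: "c \<in> arrs Q" and bc: "tgt Q b = src Q c"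
  note cYb = is_rep_carrier[OF Y b] and cXb = is_rep_carrier[OF X b]
  note cYc = is_rep_carrier[OF Y c] and cXc = is_rep_carrier[OF X c]
  have Db: "D b \<in> carrier_mat (fst Y (tgt Q b)) (fst X (src Q b))" and Dc: "D c \<in> carrier_mat (fst Y (tgt Q c)) (fst X (src Q c))"
    using D b c unfolding twist_ok_def by auto
  have cond: "snd Y c * D b + D c * snd X b = 0\<^sub>m (fst Y (tgt Q c)) (fst X (src Q b))"
    using D b c bc unfolding twist_ok_def by auto
  have YY: "snd Y c * snd Y b = 0\<^sub>m (fst Y (tgt Q c)) (fst Y (src Q b))" using Y b c bc unfolding is_rep_def by auto
  have XX: "snd X c * snd X b = 0\<^sub>m (fst X (tgt Q c)) (fst X (src Q b))" using X b c bc unfolding is_rep_def by auto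
  have twb: "snd (tw Y X D) b = four_block_mat (snd Y b) (D b) (0\<^sub>m (fst X (src Q c)) (fst Y (src Q b))) (snd X b)"
    using cYb cXb bc by (simp add: tw_def)
  have twc: "snd (tw Y X D) c = four_block_mat (snd Y c) (D c) (0\<^sub>m (fst X (tgt Q c)) (fst Y (src Q c))) (snd X c)"
    using cYc cXc by (simp add: tw_def)
  have cYb': "snd Y b \<in> carrier_mat (fst Y (src Q c)) (fst Y (src Q b))" using cYb bc by simp
  have cXb': "snd X b \<in> carrier_mat (fst X (src Q c)) (fst X (src Q b))" using cXb bc by simp
  have Db': "D b \<in> carrier_mat (fst Y (src Q c)) (fst X (src Q b))" using Db bc by simp
  have "snd (tw Y X D) c * snd (tw Y X D) b =
     four_block_mat (snd Y c * snd Y b + D c * 0\<^sub>m (fst X (src Q c)) (fst Y (src Q b)))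
       (snd Y c * D b + D c * snd X b)
       (0\<^sub>m (fst X (tgt Q c)) (fst Y (src Q c)) * snd Y b + snd X c * 0\<^sub>m (fst X (src Q c)) (fst Y (src Q b)))
       (0\<^sub>m (fst X (tgt Q c)) (fst Y (src Q c)) * D b + snd X c * snd X b)"
    unfolding twb twc
    by (rule mult_four_block_mat[OF cYc Dc zero_carrier_mat cXc cYb' Db' zero_carrier_mat cXb'])
  also have "\<dots> = four_block_mat (0\<^sub>m (fst Y (tgt Q c)) (fst Y (src Q b))) (0\<^sub>m (fst Y (tgt Q c)) (fst X (src Q b)))
       (0\<^sub>m (fst X (tgt Q c)) (fst Y (src Q b))) (0\<^sub>m (fst X (tgt Q c)) (fst X (src Q b)))"
    using YY XX cond cYb cXb cYc cXc Db Dc bc by simp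
  finally show "snd (tw Y X D) c * snd (tw Y X D) b = 0\<^sub>m (fst (tw Y X D) (tgt Q c)) (fst (tw Y X D) (src Q b))"
    by (simp add: tw_def)
qed

lemma ext1_is_ext:
  fixes X Y :: "('v,'a,'k::field) rep"
  assumes Y: "is_rep Q Y" and X: "is_rep Q X" and D: "twist_ok Q Y X D"
  shows "is_ext Q 1 X Y (ext1 Y X D)"
proof (rule is_ext_I)
  show "length (fst (ext1 Y X D)) = 1" "length (snd (ext1 Y X D)) = Suc 1" by (auto simp: ext1_def)
  show "is_rep Q X" "is_rep Q Y" by fact+
  show "j < 1 \<Longrightarrow> is_rep Q (fst (ext1 Y X D) ! j)" for j using tw_rep[OF Y X D] by (simp add: ext1_def)
  show "is_hom Q ((Y # fst (ext1 Y X D) @ [X]) ! j) ((Y # fst (ext1 Y X D) @ [X]) ! Suc j) (snd (ext1 Y X D) ! j)"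
    if j: "j < Suc 1" for j
  proof -
    have "j = 0 \<or> j = 1" using j by auto
    thus ?thesis
    proof
      assume j0: "j = 0"
      show ?thesis unfolding j0 is_hom_def
      proof (intro conjI ballI)
        fix v show "(snd (ext1 Y X D) ! 0) v \<in> carrier_mat (fst ((Y # fst (ext1 Y X D) @ [X]) ! Suc 0) v) (fst ((Y # fst (ext1 Y X D) @ [X]) ! 0) v)"
          by (simp add: ext1_def tw_def)
      next
        fix b assume b: "b \<in> arrs Q"
        note cYb = is_rep_carrier[OF Y b] and cXb = is_rep_carrier[OF X b]
        have Db: "D b \<in> carrier_mat (fst Y (tgt Q b)) (fst X (src Q b))" using D b unfolding twist_ok_def by auto
        define T where "T = four_block_mat (snd Y b) (D b) (0\<^sub>m (fst X (tgt Q b)) (fst Y (src Q b))) (snd X b)"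
        have twb: "snd (tw Y X D) b = T" using cYb cXb by (simp add: tw_def T_def)
        have cT: "T \<in> carrier_mat (fst Y (tgt Q b) + fst X (tgt Q b)) (fst Y (src Q b) + fst X (src Q b))"
          using cYb cXb by (simp add: T_def)
        have "iota (fst Y (tgt Q b)) (fst X (tgt Q b)) * snd Y b = T * iota (fst Y (src Q b)) (fst X (src Q b))"
        proof (rule eq_matI)
          fix i j assume "i < dim_row (T * iota (fst Y (src Q b)) (fst X (src Q b)) :: 'k mat)"
            "j < dim_col (T * iota (fst Y (src Q b)) (fst X (src Q b)) :: 'k mat)"
          hence i: "i < fst Y (tgt Q b) + fst X (tgt Q b)" and j: "j < fst Y (src Q b)" using cT by auto
          show "(iota (fst Y (tgt Q b)) (fst X (tgt Q b)) * snd Y b) $$ (i, j) = (T * iota (fst Y (src Q b)) (fst X (src Q b))) $$ (i, j)"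
            unfolding mult_iota_left[OF cYb i j] mult_iota_right[OF cT i j]
            using i j cYb cXb Db by (simp add: T_def)
        qed (use cT cYb in auto)
        thus "(snd (ext1 Y X D) ! 0) (tgt Q b) * snd ((Y # fst (ext1 Y X D) @ [X]) ! 0) b =
          snd ((Y # fst (ext1 Y X D) @ [X]) ! Suc 0) b * (snd (ext1 Y X D) ! 0) (src Q b)"
          by (simp add: ext1_def twb)
      qed
    next
      assume j1: "j = 1"
      show ?thesis unfolding j1 is_hom_def
      proof (intro conjI ballI)
        fix v show "(snd (ext1 Y X D) ! 1) v \<in> carrier_mat (fst ((Y # fst (ext1 Y X D) @ [X]) ! Suc 1) v) (fst ((Y # fst (ext1 Y X D) @ [X]) ! 1) v)"
          by (simp add: ext1_def tw_def)
      next
        fix b assume b: "b \<in> arrs Q"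
        note cYb = is_rep_carrier[OF Y b] and cXb = is_rep_carrier[OF X b]
        have Db: "D b \<in> carrier_mat (fst Y (tgt Q b)) (fst X (src Q b))" using D b unfolding twist_ok_def by auto
        define T where "T = four_block_mat (snd Y b) (D b) (0\<^sub>m (fst X (tgt Q b)) (fst Y (src Q b))) (snd X b)"
        have twb: "snd (tw Y X D) b = T" using cYb cXb by (simp add: tw_def T_def)
        have cT: "T \<in> carrier_mat (fst Y (tgt Q b) + fst X (tgt Q b)) (fst Y (src Q b) + fst X (src Q b))"
          using cYb cXb by (simp add: T_def)
        have "proj (fst Y (tgt Q b)) (fst X (tgt Q b)) * T = snd X b * proj (fst Y (src Q b)) (fst X (src Q b))"
        proof (rule eq_matI)
          fix i j assume "i < dim_row (snd X b * proj (fst Y (src Q b)) (fst X (src Q b)) :: 'k mat)"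
            "j < dim_col (snd X b * proj (fst Y (src Q b)) (fst X (src Q b)) :: 'k mat)"
          hence i: "i < fst X (tgt Q b)" and j: "j < fst Y (src Q b) + fst X (src Q b)" using cXb by auto
          show "(proj (fst Y (tgt Q b)) (fst X (tgt Q b)) * T) $$ (i, j) = (snd X b * proj (fst Y (src Q b)) (fst X (src Q b))) $$ (i, j)"
            unfolding mult_proj_left[OF cT i j] mult_proj_right[OF cXb i j]
            using i j cYb cXb Db by (simp add: T_def)
        qed (use cT cXb in auto)
        thus "(snd (ext1 Y X D) ! 1) (tgt Q b) * snd ((Y # fst (ext1 Y X D) @ [X]) ! 1) b =
          snd ((Y # fst (ext1 Y X D) @ [X]) ! Suc 1) b * (snd (ext1 Y X D) ! 1) (src Q b)"
          by (simp add: ext1_def twb)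
      qed
    qed
  qed
  show "lin_exact ((snd (ext1 Y X D) ! (j - 1)) v) ((snd (ext1 Y X D) ! j) v)" if "0 < j" "j \<le> 1" for v j
    using that lin_exact_iota_proj by (simp add: ext1_def)
  show "lin_exact (0\<^sub>m (fst Y v) 0) ((snd (ext1 Y X D) ! 0) v)" for v
    using lin_exact_first_iota by (simp add: ext1_def)
  show "lin_exact ((snd (ext1 Y X D) ! 1) v) (0\<^sub>m 0 (fst X v))" for v
    using lin_exact_proj_last by (simp add: ext1_def)
qed


lemma is_ext1_parts:
  assumes e: "is_ext Q 1 X Y e"
  obtains E g p where "e = ([E], [g, p])" "is_rep Q E" "is_rep Q X" "is_rep Q Y"
    "is_hom Q Y E g" "is_hom Q E X p"
    "\<And>v. v \<in> verts Q \<Longrightarrow> lin_exact (0\<^sub>m (fst Y v) 0) (g v)"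
    "\<And>v. v \<in> verts Q \<Longrightarrow> lin_exact (g v) (p v)"
    "\<And>v. v \<in> verts Q \<Longrightarrow> lin_exact (p v) (0\<^sub>m 0 (fst X v))"
proof -
  note D = is_ext_D[OF e]
  obtain E where E: "fst e = [E]" using D(1) by (cases "fst e") auto
  obtain g p where gp: "snd e = [g, p]" using D(2)
    by (cases "snd e"; cases "tl (snd e)") auto
  have e': "e = ([E], [g, p])" using E gp by (cases e) auto
  show ?thesis
  proof (rule that[OF e'])
    show "is_rep Q E" using D(5)[of 0] E by simp
    show "is_rep Q X" "is_rep Q Y" using D by auto
    show "is_hom Q Y E g" using D(6)[of 0] E gp by simp
    show "is_hom Q E X p" using D(6)[of 1] E gp by simp
    show "lin_exact (0\<^sub>m (fst Y v) 0) (g v)" if "v \<in> verts Q" for v using D(8)[OF that] gp by simp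
    show "lin_exact (g v) (p v)" if "v \<in> verts Q" for v using D(7)[OF that, of 1] gp by simp
    show "lin_exact (p v) (0\<^sub>m 0 (fst X v))" if "v \<in> verts Q" for v using D(9)[OF that] gp by simp
  qed
qed

lemma triv1_is_ext: "is_rep Q Y \<Longrightarrow> is_rep Q X \<Longrightarrow> is_ext Q 1 X Y (trivial_ext 1 X Y)"
  unfolding triv1 by (rule ext1_is_ext[OF _ _ twist_ok_zero])

lemma tw0_arr:
  assumes Y: "is_rep Q Y" and X: "is_rep Q X" and b: "b \<in> arrs Q"
  shows "snd (fst (trivial_ext 1 X Y) ! 0) b = four_block_mat (snd Y b) (0\<^sub>m (fst Y (tgt Q b)) (fst X (src Q b)))
     (0\<^sub>m (fst X (tgt Q b)) (fst Y (src Q b))) (snd X b)"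
  unfolding triv1 using is_rep_carrier[OF Y b] is_rep_carrier[OF X b] by (simp add: ext1_def tw_def)

lemma tw0_dim: "fst (fst (trivial_ext 1 X Y) ! 0) v = fst Y v + fst X v"
  unfolding triv1 by (simp add: ext1_def tw_def)

lemma triv1_maps: "snd (trivial_ext 1 X Y) ! 0 = (\<lambda>v. iota (fst Y v) (fst X v))"
  "snd (trivial_ext 1 X Y) ! 1 = (\<lambda>v. proj (fst Y v) (fst X v))"
  unfolding triv1 by (simp_all add: ext1_def)

lemma proj_likeD: "proj_like Q X \<Longrightarrow> is_rep Q E \<Longrightarrow> is_hom Q E X p \<Longrightarrow>
   (\<forall>v\<in>verts Q. \<forall>y\<in>carrier_vec (fst X v). \<exists>x\<in>carrier_vec (fst E v). p v *\<^sub>v x = y) \<Longrightarrow>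
   \<exists>s. is_hom Q X E s \<and> (\<forall>v\<in>verts Q. p v * s v = 1\<^sub>m (fst X v))"
  unfolding proj_like_def by blast

lemma inj_likeD: "inj_like Q Y \<Longrightarrow> is_rep Q E \<Longrightarrow> is_hom Q Y E g \<Longrightarrow>
   (\<forall>v\<in>verts Q. \<forall>y\<in>carrier_vec (fst Y v). g v *\<^sub>v y = 0\<^sub>v (fst E v) \<longrightarrow> y = 0\<^sub>v (fst Y v)) \<Longrightarrow>
   \<exists>r. is_hom Q E Y r \<and> (\<forall>v\<in>verts Q. r v * g v = 1\<^sub>m (fst Y v))"
  unfolding inj_like_def by blast

lemma proj_vanish_1:
  fixes X Y :: "('v,'a,'k::field) rep"
  assumes P: "proj_like Q X" and e: "is_ext Q 1 X Y e" and wf: "\<forall>b\<in>arrs Q. src Q b \<in> verts Q \<and> tgt Q b \<in> verts Q"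
  shows "ext_mor Q 1 X Y (trivial_ext 1 X Y) e"
proof -
  obtain E g p where e': "e = ([E], [g, p])" and E: "is_rep Q E" and X: "is_rep Q X" and Y: "is_rep Q Y"
    and g: "is_hom Q Y E g" and p: "is_hom Q E X p"
    and ex0: "\<And>v. v \<in> verts Q \<Longrightarrow> lin_exact (0\<^sub>m (fst Y v) 0) (g v)"
    and ex1: "\<And>v. v \<in> verts Q \<Longrightarrow> lin_exact (g v) (p v)"
    and ex2: "\<And>v. v \<in> verts Q \<Longrightarrow> lin_exact (p v) (0\<^sub>m 0 (fst X v))"
    by (rule is_ext1_parts[OF e]) blast
  have surj: "\<forall>v\<in>verts Q. \<forall>y\<in>carrier_vec (fst X v). \<exists>x\<in>carrier_vec (fst E v). p v *\<^sub>v x = y"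
  proof (intro ballI)
    fix v and y :: "'k vec" assume v: "v \<in> verts Q" and y: "y \<in> carrier_vec (fst X v)"
    show "\<exists>x\<in>carrier_vec (fst E v). p v *\<^sub>v x = y"
      by (rule lin_exact_last[OF ex2[OF v] hom_carrier[OF p v] y])
  qed
  have "\<exists>s. is_hom Q X E s \<and> (\<forall>v\<in>verts Q. p v * s v = 1\<^sub>m (fst X v))"
    by (rule proj_likeD[OF P E p surj])
  then obtain s where s: "is_hom Q X E s" and ps: "\<forall>v\<in>verts Q. p v * s v = 1\<^sub>m (fst X v)"
    by blast
  define h where "h = (\<lambda>v. four_block_mat (g v) (s v) (0\<^sub>m 0 (fst Y v)) (0\<^sub>m 0 (fst X v)))"
  have ch: "h v \<in> carrier_mat (fst E v) (fst Y v + fst X v)" if v: "v \<in> verts Q" for v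
    unfolding h_def using four_block_carrier_mat[OF hom_carrier[OF g v] zero_carrier_mat[of 0 "fst X v"]] by simp
  show ?thesis
    unfolding ext_mor_def
  proof (intro conjI exI[of _ "[h]"])
    show "is_ext Q 1 X Y (trivial_ext 1 X Y)" by (rule triv1_is_ext[OF Y X])
    show "is_ext Q 1 X Y e" by fact
    show "length [h] = 1" by simp
    show "\<forall>j<1. is_hom Q (fst (trivial_ext 1 X Y) ! j) (fst e ! j) ([h] ! j)"
    proof (intro allI impI)
      fix j :: nat assume "j < 1"
      hence j: "j = 0" by simp
      show "is_hom Q (fst (trivial_ext 1 X Y) ! j) (fst e ! j) ([h] ! j)"
        unfolding j is_hom_def
      proof (intro conjI ballI)
        fix v assume v: "v \<in> verts Q"
        show "([h] ! 0) v \<in> carrier_mat (fst (fst e ! 0) v) (fst (fst (trivial_ext 1 X Y) ! 0) v)"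
          using ch[OF v] unfolding tw0_dim by (simp add: e')
      next
        fix b assume b: "b \<in> arrs Q"
        have t: "tgt Q b \<in> verts Q" and sr: "src Q b \<in> verts Q"
          using wf b by auto
        note cg = hom_carrier[OF g] and cs = hom_carrier[OF s]
        note cYb = is_rep_carrier[OF Y b] and cXb = is_rep_carrier[OF X b] and cEb = is_rep_carrier[OF E b]
        have gh: "g (tgt Q b) * snd Y b = snd E b * g (src Q b)" by (rule hom_comm[OF g b])
        have sh: "s (tgt Q b) * snd X b = snd E b * s (src Q b)" by (rule hom_comm[OF s b])
        have "h (tgt Q b) * snd (fst (trivial_ext 1 X Y) ! 0) b =
          four_block_mat (g (tgt Q b) * snd Y b + s (tgt Q b) * 0\<^sub>m (fst X (tgt Q b)) (fst Y (src Q b)))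
           (g (tgt Q b) * 0\<^sub>m (fst Y (tgt Q b)) (fst X (src Q b)) + s (tgt Q b) * snd X b)
           (0\<^sub>m 0 (fst Y (tgt Q b)) * snd Y b + 0\<^sub>m 0 (fst X (tgt Q b)) * 0\<^sub>m (fst X (tgt Q b)) (fst Y (src Q b)))
           (0\<^sub>m 0 (fst Y (tgt Q b)) * 0\<^sub>m (fst Y (tgt Q b)) (fst X (src Q b)) + 0\<^sub>m 0 (fst X (tgt Q b)) * snd X b)"
          unfolding tw0_arr[OF Y X b] h_def
          by (rule mult_four_block_mat[OF cg[OF t] cs[OF t] zero_carrier_mat zero_carrier_mat cYb zero_carrier_mat zero_carrier_mat cXb])
        also have "\<dots> = four_block_mat (snd E b * g (src Q b)) (snd E b * s (src Q b)) (0\<^sub>m 0 (fst Y (src Q b))) (0\<^sub>m 0 (fst X (src Q b)))"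
          using gh sh cg[OF t] cs[OF t] cYb cXb mult_carrier_mat[OF cEb cg[OF sr]] mult_carrier_mat[OF cEb cs[OF sr]] by simp
        also have "\<dots> = snd E b * h (src Q b)"
          unfolding h_def by (rule mult_rowblock[symmetric, OF cEb cg[OF sr] cs[OF sr]])
        finally show "([h] ! 0) (tgt Q b) * snd (fst (trivial_ext 1 X Y) ! 0) b = snd (fst e ! 0) b * ([h] ! 0) (src Q b)"
          by (simp add: e')
      qed
    qed
    show "let H = id_mor Y # [h] @ [id_mor X] in \<forall>j<Suc 1. \<forall>v\<in>verts Q.
            (H ! Suc j) v * (snd (trivial_ext 1 X Y) ! j) v = (snd e ! j) v * (H ! j) v"
      unfolding Let_def
    proof (intro allI impI ballI)
      fix j v assume j: "j < Suc 1" and v: "v \<in> verts Q"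
      note cg = hom_carrier[OF g v] and cs = hom_carrier[OF s v] and cp = hom_carrier[OF p v]
      have "j = 0 \<or> j = 1" using j by auto
      thus "((id_mor Y # [h] @ [id_mor X]) ! Suc j) v * (snd (trivial_ext 1 X Y) ! j) v =
          (snd e ! j) v * ((id_mor Y # [h] @ [id_mor X]) ! j) v"
      proof
        assume j0: "j = 0"
        have "h v * iota (fst Y v) (fst X v) = g v"
        proof (rule eq_matI)
          fix a c assume "a < dim_row (g v)" "c < dim_col (g v)"
          hence a: "a < fst E v" and c: "c < fst Y v" using cg by auto
          show "(h v * iota (fst Y v) (fst X v)) $$ (a, c) = g v $$ (a, c)"
            unfolding mult_iota_right[OF ch[OF v] a c] using a c cg cs by (simp add: h_def)
        qed (use cg ch[OF v] in auto)
        thus ?thesis using cg unfolding j0 triv1_maps by (simp add: e' id_mor_def)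
      next
        assume j1: "j = 1"
        have "p v * h v = four_block_mat (p v * g v) (p v * s v) (0\<^sub>m 0 (fst Y v)) (0\<^sub>m 0 (fst X v))"
          unfolding h_def by (rule mult_rowblock[OF cp cg cs])
        also have "\<dots> = four_block_mat (0\<^sub>m (fst X v) (fst Y v)) (1\<^sub>m (fst X v)) (0\<^sub>m 0 (fst Y v)) (0\<^sub>m 0 (fst X v))"
          using lin_exact_D(1)[OF ex1[OF v] cg cp] ps v by simp
        also have "\<dots> = proj (fst Y v) (fst X v)"
          by (rule eq_matI) (auto simp: proj_def)
        finally show ?thesis using cp unfolding j1 triv1_maps by (simp add: e' id_mor_def)
      qed
    qed
  qed
qed

lemma inj_vanish_1:
  fixes X Y :: "('v,'a,'k::field) rep"
  assumes I: "inj_like Q Y" and e: "is_ext Q 1 X Y e" and wf: "\<forall>b\<in>arrs Q. src Q b \<in> verts Q \<and> tgt Q b \<in> verts Q"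
  shows "ext_mor Q 1 X Y e (trivial_ext 1 X Y)"
proof -
  obtain E g p where e': "e = ([E], [g, p])" and E: "is_rep Q E" and X: "is_rep Q X" and Y: "is_rep Q Y"
    and g: "is_hom Q Y E g" and p: "is_hom Q E X p"
    and ex0: "\<And>v. v \<in> verts Q \<Longrightarrow> lin_exact (0\<^sub>m (fst Y v) 0) (g v)"
    and ex1: "\<And>v. v \<in> verts Q \<Longrightarrow> lin_exact (g v) (p v)"
    and ex2: "\<And>v. v \<in> verts Q \<Longrightarrow> lin_exact (p v) (0\<^sub>m 0 (fst X v))"
    by (rule is_ext1_parts[OF e]) blast
  have inj: "\<forall>v\<in>verts Q. \<forall>y\<in>carrier_vec (fst Y v). g v *\<^sub>v y = 0\<^sub>v (fst E v) \<longrightarrow> y = 0\<^sub>v (fst Y v)"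
  proof (intro ballI impI)
    fix v and y :: "'k vec" assume v: "v \<in> verts Q" and y: "y \<in> carrier_vec (fst Y v)" and z: "g v *\<^sub>v y = 0\<^sub>v (fst E v)"
    show "y = 0\<^sub>v (fst Y v)"
      by (rule lin_exact_first[OF ex0[OF v] hom_carrier[OF g v] y z])
  qed
  have "\<exists>r. is_hom Q E Y r \<and> (\<forall>v\<in>verts Q. r v * g v = 1\<^sub>m (fst Y v))"
    by (rule inj_likeD[OF I E g inj])
  then obtain r where r: "is_hom Q E Y r" and rg: "\<forall>v\<in>verts Q. r v * g v = 1\<^sub>m (fst Y v)"
    by blast
  define h where "h = (\<lambda>v. four_block_mat (r v) (0\<^sub>m (fst Y v) 0) (p v) (0\<^sub>m (fst X v) 0))"
  have ch: "h v \<in> carrier_mat (fst Y v + fst X v) (fst E v)" if v: "v \<in> verts Q" for v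
    unfolding h_def using four_block_carrier_mat[OF hom_carrier[OF r v] zero_carrier_mat[of "fst X v" 0]] by simp
  show ?thesis
    unfolding ext_mor_def
  proof (intro conjI exI[of _ "[h]"])
    show "is_ext Q 1 X Y (trivial_ext 1 X Y)" by (rule triv1_is_ext[OF Y X])
    show "is_ext Q 1 X Y e" by fact
    show "length [h] = 1" by simp
    show "\<forall>j<1. is_hom Q (fst e ! j) (fst (trivial_ext 1 X Y) ! j) ([h] ! j)"
    proof (intro allI impI)
      fix j :: nat assume "j < 1"
      hence j: "j = 0" by simp
      show "is_hom Q (fst e ! j) (fst (trivial_ext 1 X Y) ! j) ([h] ! j)"
        unfolding j is_hom_def
      proof (intro conjI ballI)
        fix v assume v: "v \<in> verts Q"
        show "([h] ! 0) v \<in> carrier_mat (fst (fst (trivial_ext 1 X Y) ! 0) v) (fst (fst e ! 0) v)"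
          using ch[OF v] unfolding tw0_dim by (simp add: e')
      next
        fix b assume b: "b \<in> arrs Q"
        have t: "tgt Q b \<in> verts Q" and sr: "src Q b \<in> verts Q"
          using wf b by auto
        note cr = hom_carrier[OF r] and cp = hom_carrier[OF p]
        note cYb = is_rep_carrier[OF Y b] and cXb = is_rep_carrier[OF X b] and cEb = is_rep_carrier[OF E b]
        have rh: "r (tgt Q b) * snd E b = snd Y b * r (src Q b)" by (rule hom_comm[OF r b])
        have ph: "p (tgt Q b) * snd E b = snd X b * p (src Q b)" by (rule hom_comm[OF p b])
        have "h (tgt Q b) * snd E b = four_block_mat (r (tgt Q b) * snd E b) (0\<^sub>m (fst Y (tgt Q b)) 0)
            (p (tgt Q b) * snd E b) (0\<^sub>m (fst X (tgt Q b)) 0)"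
          unfolding h_def by (rule mult_colblock[OF cEb cr[OF t] cp[OF t]])
        also have "\<dots> = four_block_mat (snd Y b * r (src Q b) + 0\<^sub>m (fst Y (tgt Q b)) (fst X (src Q b)) * p (src Q b))
           (snd Y b * 0\<^sub>m (fst Y (src Q b)) 0 + 0\<^sub>m (fst Y (tgt Q b)) (fst X (src Q b)) * 0\<^sub>m (fst X (src Q b)) 0)
           (0\<^sub>m (fst X (tgt Q b)) (fst Y (src Q b)) * r (src Q b) + snd X b * p (src Q b))
           (0\<^sub>m (fst X (tgt Q b)) (fst Y (src Q b)) * 0\<^sub>m (fst Y (src Q b)) 0 + snd X b * 0\<^sub>m (fst X (src Q b)) 0)"
          using rh ph cr[OF sr] cp[OF sr] cYb cXb mult_carrier_mat[OF cr[OF t] cEb] mult_carrier_mat[OF cp[OF t] cEb] by simp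
        also have "\<dots> = snd (fst (trivial_ext 1 X Y) ! 0) b * h (src Q b)"
          unfolding tw0_arr[OF Y X b] h_def
          by (rule mult_four_block_mat[symmetric, OF cYb zero_carrier_mat zero_carrier_mat cXb cr[OF sr] zero_carrier_mat cp[OF sr] zero_carrier_mat])
        finally show "([h] ! 0) (tgt Q b) * snd (fst e ! 0) b = snd (fst (trivial_ext 1 X Y) ! 0) b * ([h] ! 0) (src Q b)"
          by (simp add: e')
      qed
    qed
    show "let H = id_mor Y # [h] @ [id_mor X] in \<forall>j<Suc 1. \<forall>v\<in>verts Q.
            (H ! Suc j) v * (snd e ! j) v = (snd (trivial_ext 1 X Y) ! j) v * (H ! j) v"
      unfolding Let_def
    proof (intro allI impI ballI)
      fix j v assume j: "j < Suc 1" and v: "v \<in> verts Q"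
      note cg = hom_carrier[OF g v] and cr = hom_carrier[OF r v] and cp = hom_carrier[OF p v]
      have "j = 0 \<or> j = 1" using j by auto
      thus "((id_mor Y # [h] @ [id_mor X]) ! Suc j) v * (snd e ! j) v =
          (snd (trivial_ext 1 X Y) ! j) v * ((id_mor Y # [h] @ [id_mor X]) ! j) v"
      proof
        assume j0: "j = 0"
        have "h v * g v = four_block_mat (r v * g v) (0\<^sub>m (fst Y v) 0) (p v * g v) (0\<^sub>m (fst X v) 0)"
          unfolding h_def by (rule mult_colblock[OF cg cr cp])
        also have "\<dots> = four_block_mat (1\<^sub>m (fst Y v)) (0\<^sub>m (fst Y v) 0) (0\<^sub>m (fst X v) (fst Y v)) (0\<^sub>m (fst X v) 0)"
          using lin_exact_D(1)[OF ex1[OF v] cg cp] rg v by simp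
        also have "\<dots> = iota (fst Y v) (fst X v)"
          by (rule eq_matI) (auto simp: iota_def)
        finally show ?thesis unfolding j0 triv1_maps by (simp add: e' id_mor_def)
      next
        assume j1: "j = 1"
        have "proj (fst Y v) (fst X v) * h v = p v"
        proof (rule eq_matI)
          fix a c assume "a < dim_row (p v)" "c < dim_col (p v)"
          hence a: "a < fst X v" and c: "c < fst E v" using cp by auto
          show "(proj (fst Y v) (fst X v) * h v) $$ (a, c) = p v $$ (a, c)"
            unfolding mult_proj_left[OF ch[OF v] a c] using a c cr cp by (simp add: h_def)
        qed (use cp ch[OF v] in auto)
        thus ?thesis using cp unfolding j1 triv1_maps by (simp add: e' id_mor_def)
      qed
    qed
  qed
qed

lemma proj_vanishes:
  fixes X :: "('v,'a,'k::field) rep"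
  assumes P: "proj_like Q X" and wf: "\<forall>b\<in>arrs Q. src Q b \<in> verts Q \<and> tgt Q b \<in> verts Q" and i: "i \<ge> 1"
  shows "ext_vanishes Q i X Y"
  unfolding ext_vanishes_def yoneda_equiv_def
proof (intro allI impI)
  fix e assume e: "is_ext Q i X Y e"
  have "ext_mor Q i X Y (trivial_ext i X Y) e"
  proof (cases "i = 1")
    case True thus ?thesis using proj_vanish_1[OF P _ wf] e by simp
  next
    case False thus ?thesis using proj_vanish_ge2[OF P _ e] i by simp
  qed
  thus "(\<lambda>e e'. ext_mor Q i X Y e e' \<or> ext_mor Q i X Y e' e)\<^sup>*\<^sup>* e (trivial_ext i X Y)"
    by (intro r_into_rtranclp) simp
qed

lemma inj_vanishes:
  fixes Y :: "('v,'a,'k::field) rep"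
  assumes I: "inj_like Q Y" and wf: "\<forall>b\<in>arrs Q. src Q b \<in> verts Q \<and> tgt Q b \<in> verts Q" and i: "i \<ge> 1"
  shows "ext_vanishes Q i X Y"
  unfolding ext_vanishes_def yoneda_equiv_def
proof (intro allI impI)
  fix e assume e: "is_ext Q i X Y e"
  have "ext_mor Q i X Y e (trivial_ext i X Y)"
  proof (cases "i = 1")
    case True thus ?thesis using inj_vanish_1[OF I _ wf] e by simp
  next
    case False thus ?thesis using inj_vanish_ge2[OF I _ e] i by simp
  qed
  thus "(\<lambda>e e'. ext_mor Q i X Y e e' \<or> ext_mor Q i X Y e' e)\<^sup>*\<^sup>* e (trivial_ext i X Y)"
    by (intro r_into_rtranclp) simp
qed


definition has_retr :: "('v,'a) quiver \<Rightarrow> ('v,'a,'k::field) rep \<Rightarrow> ('v,'a,'k) extension \<Rightarrow> bool" where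
  "has_retr Q Y e \<longleftrightarrow> (\<exists>r. is_hom Q (fst e ! 0) Y r \<and> (\<forall>v\<in>verts Q. r v * (snd e ! 0) v = 1\<^sub>m (fst Y v)))"

lemma hom_comp:
  assumes wf: "\<forall>b\<in>arrs Q. src Q b \<in> verts Q \<and> tgt Q b \<in> verts Q"
    and M: "is_rep Q M" and N: "is_rep Q N" and K: "is_rep Q K"
    and f: "is_hom Q M N f" and g: "is_hom Q N K g"
  shows "is_hom Q M K (\<lambda>v. g v * f v)"
  unfolding is_hom_def
proof (intro conjI ballI)
  fix v assume v: "v \<in> verts Q"
  show "g v * f v \<in> carrier_mat (fst K v) (fst M v)" using hom_carrier[OF f v] hom_carrier[OF g v] by simp
next
  fix b assume b: "b \<in> arrs Q"
  have t: "tgt Q b \<in> verts Q" and s: "src Q b \<in> verts Q" using wf b by auto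
  note cM = is_rep_carrier[OF M b] and cN = is_rep_carrier[OF N b] and cK = is_rep_carrier[OF K b]
  note cft = hom_carrier[OF f t] and cfs = hom_carrier[OF f s] and cgt = hom_carrier[OF g t] and cgs = hom_carrier[OF g s]
  have "g (tgt Q b) * f (tgt Q b) * snd M b = g (tgt Q b) * (f (tgt Q b) * snd M b)"
    using cM cft cgt by simp
  also have "\<dots> = g (tgt Q b) * (snd N b * f (src Q b))" by (simp add: hom_comm[OF f b])
  also have "\<dots> = (g (tgt Q b) * snd N b) * f (src Q b)" using cN cfs cgt by simp
  also have "\<dots> = (snd K b * g (src Q b)) * f (src Q b)" by (simp add: hom_comm[OF g b])
  also have "\<dots> = snd K b * (g (src Q b) * f (src Q b))" using cK cgs cfs by simp
  finally show "g (tgt Q b) * f (tgt Q b) * snd M b = snd K b * (g (src Q b) * f (src Q b))" .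
qed

lemma ext_mor1_D:
  assumes m: "ext_mor Q 1 X Y e1 e2" and e1: "e1 = ([E1], [g1, p1])" and e2: "e2 = ([E2], [g2, p2])"
  obtains h where "is_hom Q E1 E2 h" "\<And>v. v \<in> verts Q \<Longrightarrow> h v * g1 v = g2 v"
    "\<And>v. v \<in> verts Q \<Longrightarrow> p1 v = p2 v * h v"
proof -
  obtain hs where L: "length hs = 1" and hh: "\<forall>j<1. is_hom Q (fst e1 ! j) (fst e2 ! j) (hs ! j)"
    and cm: "let H = id_mor Y # hs @ [id_mor X] in \<forall>j<Suc 1. \<forall>v\<in>verts Q.
        (H ! Suc j) v * (snd e1 ! j) v = (snd e2 ! j) v * (H ! j) v"
    using m unfolding ext_mor_def by blast
  obtain h where hs: "hs = [h]" using L by (cases hs) auto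
  note ex1 = m[unfolded ext_mor_def, THEN conjunct1]
  note ex2 = m[unfolded ext_mor_def, THEN conjunct2, THEN conjunct1]
  obtain E1' g1' p1' where A: "e1 = ([E1'], [g1', p1'])" "is_hom Q Y E1' g1'" "is_hom Q E1' X p1'"
    using is_ext1_parts[OF ex1] by metis
  obtain E2' g2' p2' where B: "e2 = ([E2'], [g2', p2'])" "is_hom Q Y E2' g2'" "is_hom Q E2' X p2'"
    using is_ext1_parts[OF ex2] by metis
  have gg: "is_hom Q Y E2 g2" "is_hom Q E1 X p1" using A B e1 e2 by auto
  show ?thesis
  proof (rule that)
    show "is_hom Q E1 E2 h" using hh hs e1 e2 by simp
    fix v assume v: "v \<in> verts Q"
    have "((id_mor Y # hs @ [id_mor X]) ! Suc 0) v * (snd e1 ! 0) v = (snd e2 ! 0) v * ((id_mor Y # hs @ [id_mor X]) ! 0) v"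
      using cm v unfolding Let_def by blast
    hence c0: "(h v * g1 v) = g2 v * 1\<^sub>m (fst Y v)" using hs e1 e2 by (simp add: id_mor_def)
    thus "h v * g1 v = g2 v" using hom_carrier[OF gg(1) v] by simp
    have "((id_mor Y # hs @ [id_mor X]) ! Suc 1) v * (snd e1 ! 1) v = (snd e2 ! 1) v * ((id_mor Y # hs @ [id_mor X]) ! 1) v"
      using cm v unfolding Let_def by blast
    hence c1: "1\<^sub>m (fst X v) * p1 v = p2 v * h v" using hs e1 e2 by (simp add: id_mor_def)
    thus "p1 v = p2 v * h v" using hom_carrier[OF gg(2) v] by simp
  qed
qed

lemma mat_vec_unit: "(A :: 'k::field mat) \<in> carrier_mat n m \<Longrightarrow> j < m \<Longrightarrow> A *\<^sub>v unit_vec m j = col A j"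
proof (rule eq_vecI)
  fix i assume A: "A \<in> carrier_mat n m" and j: "j < m" and i: "i < dim_vec (col A j)"
  have "(A *\<^sub>v unit_vec m j) $ i = row A i \<bullet> unit_vec m j" using A i by simp
  also have "\<dots> = row A i $ j" by (rule scalar_prod_right_unit[OF j])
  finally show "(A *\<^sub>v unit_vec m j) $ i = col A j $ i" using A i j by simp
qed simp

lemma five_vertex:
  fixes g1 p1 g2 p2 h :: "'k::field mat"
  assumes cg1: "g1 \<in> carrier_mat m1 a" and cp1: "p1 \<in> carrier_mat c m1"
    and cg2: "g2 \<in> carrier_mat m2 a" and cp2: "p2 \<in> carrier_mat c m2" and ch: "h \<in> carrier_mat m2 m1"
    and hg: "h * g1 = g2" and ph: "p1 = p2 * h"
    and inj2: "\<And>y. y \<in> carrier_vec a \<Longrightarrow> g2 *\<^sub>v y = 0\<^sub>v m2 \<Longrightarrow> y = 0\<^sub>v a"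
    and ex1: "\<And>x. x \<in> carrier_vec m1 \<Longrightarrow> p1 *\<^sub>v x = 0\<^sub>v c \<Longrightarrow> \<exists>y\<in>carrier_vec a. g1 *\<^sub>v y = x"
    and ex2: "\<And>w. w \<in> carrier_vec m2 \<Longrightarrow> p2 *\<^sub>v w = 0\<^sub>v c \<Longrightarrow> \<exists>y\<in>carrier_vec a. g2 *\<^sub>v y = w"
    and surj1: "\<And>z. z \<in> carrier_vec c \<Longrightarrow> \<exists>x\<in>carrier_vec m1. p1 *\<^sub>v x = z"
  shows "\<exists>L. L \<in> carrier_mat m1 m2 \<and> L * h = 1\<^sub>m m1 \<and> h * L = 1\<^sub>m m2"
proof -
  have injh: "x = 0\<^sub>v m1" if x: "x \<in> carrier_vec m1" and hx: "h *\<^sub>v x = 0\<^sub>v m2" for x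
  proof -
    have "p1 *\<^sub>v x = p2 *\<^sub>v (h *\<^sub>v x)" using ph cp2 ch x by simp
    also have "\<dots> = 0\<^sub>v c" using hx cp2 by simp
    finally obtain y where y: "y \<in> carrier_vec a" and gy: "g1 *\<^sub>v y = x" using ex1[OF x] by blast
    have "g2 *\<^sub>v y = h *\<^sub>v (g1 *\<^sub>v y)" using hg[symmetric] ch cg1 y by simp
    also have "\<dots> = 0\<^sub>v m2" using gy hx by simp
    finally have "y = 0\<^sub>v a" using inj2 y by blast
    thus ?thesis using gy cg1 by simp
  qed
  obtain L where cL: "L \<in> carrier_mat m1 m2" and Lh: "L * h = 1\<^sub>m m1"
    using left_inverse_mat[OF ch injh] by blast
  have surjh: "\<exists>x\<in>carrier_vec m1. h *\<^sub>v x = w" if w: "w \<in> carrier_vec m2" for w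
  proof -
    obtain u where u: "u \<in> carrier_vec m1" and pu: "p1 *\<^sub>v u = p2 *\<^sub>v w" using surj1[of "p2 *\<^sub>v w"] cp2 w by auto
    have "p2 *\<^sub>v (w - h *\<^sub>v u) = p2 *\<^sub>v w - p2 *\<^sub>v (h *\<^sub>v u)"
      using cp2 ch w u by (simp add: mult_minus_distrib_mat_vec)
    also have "p2 *\<^sub>v (h *\<^sub>v u) = p1 *\<^sub>v u" using ph cp2 ch u by simp
    finally have "p2 *\<^sub>v (w - h *\<^sub>v u) = 0\<^sub>v c" using pu cp2 w by simp
    then obtain y where y: "y \<in> carrier_vec a" and gy: "g2 *\<^sub>v y = w - h *\<^sub>v u"
      using ex2[of "w - h *\<^sub>v u"] ch u w by auto
    have "h *\<^sub>v (u + g1 *\<^sub>v y) = h *\<^sub>v u + h *\<^sub>v (g1 *\<^sub>v y)"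
      using ch cg1 u y by (simp add: mult_add_distrib_mat_vec)
    also have "h *\<^sub>v (g1 *\<^sub>v y) = g2 *\<^sub>v y" using hg ch cg1 y by (metis assoc_mult_mat_vec)
    finally have "h *\<^sub>v (u + g1 *\<^sub>v y) = h *\<^sub>v u + (w - h *\<^sub>v u)" using gy by simp
    also have "\<dots> = w" using ch u w by (intro eq_vecI) auto
    finally show ?thesis using u y cg1 by (intro bexI[of _ "u + g1 *\<^sub>v y"]) auto
  qed
  have "h * L = 1\<^sub>m m2"
  proof (rule mat_col_eqI)
    fix j assume "j < dim_col (1\<^sub>m m2 :: 'k mat)"
    hence j: "j < m2" by simp
    obtain x where x: "x \<in> carrier_vec m1" and hx: "h *\<^sub>v x = unit_vec m2 j" using surjh[of "unit_vec m2 j"] by auto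
    have "col (h * L) j = h *\<^sub>v col L j" using col_mult2[OF ch cL j] .
    also have "col L j = L *\<^sub>v (h *\<^sub>v x)" using mat_vec_unit[OF cL j] hx by simp
    also have "L *\<^sub>v (h *\<^sub>v x) = x" using Lh cL ch x by (metis assoc_mult_mat_vec one_mult_mat_vec)
    finally show "col (h * L) j = col (1\<^sub>m m2) j" using hx j by simp
  qed (use ch cL in auto)
  thus ?thesis using cL Lh by blast
qed

lemma retr_transfer:
  fixes X Y :: "('v,'a,'k::field) rep"
  assumes wf: "\<forall>b\<in>arrs Q. src Q b \<in> verts Q \<and> tgt Q b \<in> verts Q"
    and m: "ext_mor Q 1 X Y e1 e2"
  shows "has_retr Q Y e1 \<longleftrightarrow> has_retr Q Y e2"
proof -
  note ex1 = m[unfolded ext_mor_def, THEN conjunct1]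
  note ex2 = m[unfolded ext_mor_def, THEN conjunct2, THEN conjunct1]
  obtain E1 g1 p1 where e1: "e1 = ([E1], [g1, p1])" and E1: "is_rep Q E1" and X: "is_rep Q X" and Y: "is_rep Q Y"
    and g1: "is_hom Q Y E1 g1" and p1: "is_hom Q E1 X p1"
    and x10: "\<And>v. v \<in> verts Q \<Longrightarrow> lin_exact (0\<^sub>m (fst Y v) 0) (g1 v)"
    and x11: "\<And>v. v \<in> verts Q \<Longrightarrow> lin_exact (g1 v) (p1 v)"
    and x12: "\<And>v. v \<in> verts Q \<Longrightarrow> lin_exact (p1 v) (0\<^sub>m 0 (fst X v))"
    by (rule is_ext1_parts[OF ex1]) blast
  obtain E2 g2 p2 where e2: "e2 = ([E2], [g2, p2])" and E2: "is_rep Q E2"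
    and g2: "is_hom Q Y E2 g2" and p2: "is_hom Q E2 X p2"
    and x20: "\<And>v. v \<in> verts Q \<Longrightarrow> lin_exact (0\<^sub>m (fst Y v) 0) (g2 v)"
    and x21: "\<And>v. v \<in> verts Q \<Longrightarrow> lin_exact (g2 v) (p2 v)"
    and x22: "\<And>v. v \<in> verts Q \<Longrightarrow> lin_exact (p2 v) (0\<^sub>m 0 (fst X v))"
    by (rule is_ext1_parts[OF ex2]) blast
  obtain h where h: "is_hom Q E1 E2 h" and hg: "\<And>v. v \<in> verts Q \<Longrightarrow> h v * g1 v = g2 v"
    and ph: "\<And>v. v \<in> verts Q \<Longrightarrow> p1 v = p2 v * h v"
    by (rule ext_mor1_D[OF m e1 e2]) blast
  show ?thesis
  proof
    assume "has_retr Q Y e2"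
    then obtain r where r: "is_hom Q E2 Y r" and rg: "\<forall>v\<in>verts Q. r v * g2 v = 1\<^sub>m (fst Y v)"
      unfolding has_retr_def e2 by auto
    show "has_retr Q Y e1"
      unfolding has_retr_def e1
    proof (intro exI conjI ballI)
      show "is_hom Q (fst ([E1], [g1, p1]) ! 0) Y (\<lambda>v. r v * h v)" using hom_comp[OF wf E1 E2 Y h r] by simp
      fix v assume v: "v \<in> verts Q"
      have "r v * h v * g1 v = r v * (h v * g1 v)"
        using hom_carrier[OF r v] hom_carrier[OF h v] hom_carrier[OF g1 v] by simp
      thus "r v * h v * (snd ([E1], [g1, p1]) ! 0) v = 1\<^sub>m (fst Y v)" using hg[OF v] rg v by simp
    qed
  next
    assume "has_retr Q Y e1"
    then obtain r where r: "is_hom Q E1 Y r" and rg: "\<forall>v\<in>verts Q. r v * g1 v = 1\<^sub>m (fst Y v)"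
      unfolding has_retr_def e1 by auto
    have exL: "\<exists>L. L \<in> carrier_mat (fst E1 v) (fst E2 v) \<and> L * h v = 1\<^sub>m (fst E1 v) \<and> h v * L = 1\<^sub>m (fst E2 v)"
      if v: "v \<in> verts Q" for v
    proof (rule five_vertex[OF hom_carrier[OF g1 v] hom_carrier[OF p1 v] hom_carrier[OF g2 v] hom_carrier[OF p2 v]
          hom_carrier[OF h v] hg[OF v] ph[OF v]])
      show "y = 0\<^sub>v (fst Y v)" if "y \<in> carrier_vec (fst Y v)" "g2 v *\<^sub>v y = 0\<^sub>v (fst E2 v)" for y
        by (rule lin_exact_first[OF x20[OF v] hom_carrier[OF g2 v] that])
      show "\<exists>y\<in>carrier_vec (fst Y v). g1 v *\<^sub>v y = x" if "x \<in> carrier_vec (fst E1 v)" "p1 v *\<^sub>v x = 0\<^sub>v (fst X v)" for x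
        by (rule lin_exact_D(2)[OF x11[OF v] hom_carrier[OF g1 v] hom_carrier[OF p1 v] that])
      show "\<exists>y\<in>carrier_vec (fst Y v). g2 v *\<^sub>v y = w" if "w \<in> carrier_vec (fst E2 v)" "p2 v *\<^sub>v w = 0\<^sub>v (fst X v)" for w
        by (rule lin_exact_D(2)[OF x21[OF v] hom_carrier[OF g2 v] hom_carrier[OF p2 v] that])
      show "\<exists>x\<in>carrier_vec (fst E1 v). p1 v *\<^sub>v x = z" if "z \<in> carrier_vec (fst X v)" for z
        by (rule lin_exact_last[OF x12[OF v] hom_carrier[OF p1 v] that])
    qed
    define L where "L = (\<lambda>v. SOME L. L \<in> carrier_mat (fst E1 v) (fst E2 v) \<and> L * h v = 1\<^sub>m (fst E1 v) \<and> h v * L = 1\<^sub>m (fst E2 v))"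
    have L: "L v \<in> carrier_mat (fst E1 v) (fst E2 v) \<and> L v * h v = 1\<^sub>m (fst E1 v) \<and> h v * L v = 1\<^sub>m (fst E2 v)"
      if v: "v \<in> verts Q" for v
      unfolding L_def by (rule someI_ex[OF exL[OF v]])
    have Lhom: "is_hom Q E2 E1 L"
      unfolding is_hom_def
    proof (intro conjI ballI)
      fix v assume "v \<in> verts Q" thus "L v \<in> carrier_mat (fst E1 v) (fst E2 v)" using L by blast
    next
      fix b assume b: "b \<in> arrs Q"
      have t: "tgt Q b \<in> verts Q" and s: "src Q b \<in> verts Q" using wf b by auto
      note c1 = is_rep_carrier[OF E1 b] and c2 = is_rep_carrier[OF E2 b]
      have Lt: "L (tgt Q b) \<in> carrier_mat (fst E1 (tgt Q b)) (fst E2 (tgt Q b))" using L[OF t] by blast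
      have Ls: "L (src Q b) \<in> carrier_mat (fst E1 (src Q b)) (fst E2 (src Q b))" using L[OF s] by blast
      note ht = hom_carrier[OF h t] and hs = hom_carrier[OF h s]
      have "L (tgt Q b) * snd E2 b = L (tgt Q b) * snd E2 b * (h (src Q b) * L (src Q b))"
        using L[OF s] Lt c2 by simp
      also have "\<dots> = L (tgt Q b) * (snd E2 b * h (src Q b)) * L (src Q b)"
        using assoc_mult_mat[OF Lt c2 mult_carrier_mat[OF hs Ls]] assoc_mult_mat[OF Lt mult_carrier_mat[OF c2 hs] Ls]
          assoc_mult_mat[OF c2 hs Ls] by simp
      also have "snd E2 b * h (src Q b) = h (tgt Q b) * snd E1 b" using hom_comm[OF h b] by simp
      also have "L (tgt Q b) * (h (tgt Q b) * snd E1 b) * L (src Q b) = (L (tgt Q b) * h (tgt Q b)) * snd E1 b * L (src Q b)"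
        using Lt ht c1 by simp
      also have "\<dots> = snd E1 b * L (src Q b)" using L[OF t] c1 by simp
      finally show "L (tgt Q b) * snd E2 b = snd E1 b * L (src Q b)" .
    qed
    show "has_retr Q Y e2"
      unfolding has_retr_def e2
    proof (intro exI conjI ballI)
      show "is_hom Q (fst ([E2], [g2, p2]) ! 0) Y (\<lambda>v. r v * L v)" using hom_comp[OF wf E2 E1 Y Lhom r] by simp
      fix v assume v: "v \<in> verts Q"
      have cL: "L v \<in> carrier_mat (fst E1 v) (fst E2 v)" using L[OF v] by blast
      have "r v * L v * g2 v = r v * (L v * (h v * g1 v))"
        using hom_carrier[OF r v] cL hom_carrier[OF g2 v] hg[OF v] by simp
      also have "\<dots> = r v * ((L v * h v) * g1 v)"
        using cL hom_carrier[OF h v] hom_carrier[OF g1 v] by simp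
      also have "\<dots> = 1\<^sub>m (fst Y v)" using L[OF v] rg v hom_carrier[OF g1 v] by simp
      finally show "r v * L v * (snd ([E2], [g2, p2]) ! 0) v = 1\<^sub>m (fst Y v)" by simp
    qed
  qed
qed

lemma yoneda_retr:
  fixes X Y :: "('v,'a,'k::field) rep"
  assumes wf: "\<forall>b\<in>arrs Q. src Q b \<in> verts Q \<and> tgt Q b \<in> verts Q"
    and y: "yoneda_equiv Q 1 X Y e e'"
  shows "has_retr Q Y e \<longleftrightarrow> has_retr Q Y e'"
  using y unfolding yoneda_equiv_def
proof (induction rule: rtranclp_induct)
  case base thus ?case by simp
next
  case (step b c)
  thus ?case using retr_transfer[OF wf, of X Y b c] retr_transfer[OF wf, of X Y c b] by blast
qed

definition retr0 :: "nat \<Rightarrow> nat \<Rightarrow> 'k::field mat" where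
  "retr0 a b = mat a (a + b) (\<lambda>(i, j). if i = j then 1 else 0)"

lemma retr0_carrier[simp]: "retr0 a b \<in> carrier_mat a (a + b)" by (simp add: retr0_def)
lemma retr0_dims[simp]: "dim_row (retr0 a b) = a" "dim_col (retr0 a b) = a + b" by (auto simp: retr0_def)

lemma row_retr0: "i < a \<Longrightarrow> row (retr0 a b :: 'k::field mat) i = unit_vec (a + b) i"
  by (intro eq_vecI) (auto simp: retr0_def unit_vec_def)

lemma col_retr0: "j < a + b \<Longrightarrow> col (retr0 a b :: 'k::field mat) j = (if j < a then unit_vec a j else 0\<^sub>v a)"
  by (intro eq_vecI) (auto simp: retr0_def unit_vec_def)

lemma triv_has_retr:
  fixes X Y :: "('v,'a,'k::field) rep"
  assumes wf: "\<forall>b\<in>arrs Q. src Q b \<in> verts Q \<and> tgt Q b \<in> verts Q"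
    and Y: "is_rep Q Y" and X: "is_rep Q X"
  shows "has_retr Q Y (trivial_ext 1 X Y)"
  unfolding has_retr_def
proof (intro exI conjI ballI)
  let ?r = "\<lambda>v. retr0 (fst Y v) (fst X v) :: 'k mat"
  show "is_hom Q (fst (trivial_ext 1 X Y) ! 0) Y ?r"
    unfolding is_hom_def
  proof (intro conjI ballI)
    fix v show "?r v \<in> carrier_mat (fst Y v) (fst (fst (trivial_ext 1 X Y) ! 0) v)"
      unfolding tw0_dim by simp
  next
    fix b assume b: "b \<in> arrs Q"
    note cY = is_rep_carrier[OF Y b] and cX = is_rep_carrier[OF X b]
    define T where "T = four_block_mat (snd Y b) (0\<^sub>m (fst Y (tgt Q b)) (fst X (src Q b)))
     (0\<^sub>m (fst X (tgt Q b)) (fst Y (src Q b))) (snd X b)"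
    have cT: "T \<in> carrier_mat (fst Y (tgt Q b) + fst X (tgt Q b)) (fst Y (src Q b) + fst X (src Q b))"
      using cY cX by (simp add: T_def)
    have "?r (tgt Q b) * T = snd Y b * ?r (src Q b)"
    proof (rule eq_matI)
      fix i j assume "i < dim_row (snd Y b * ?r (src Q b))" "j < dim_col (snd Y b * ?r (src Q b))"
      hence i: "i < fst Y (tgt Q b)" and j: "j < fst Y (src Q b) + fst X (src Q b)" using cY by auto
      have "(?r (tgt Q b) * T) $$ (i, j) = unit_vec (fst Y (tgt Q b) + fst X (tgt Q b)) i \<bullet> col T j"
        using i j cT by (simp add: row_retr0)
      also have "\<dots> = col T j $ i" using i cT j by (intro scalar_prod_left_unit) auto
      also have "\<dots> = (if j < fst Y (src Q b) then snd Y b $$ (i, j) else 0)"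
        using i j cY cX by (simp add: T_def)
      also have "\<dots> = row (snd Y b) i \<bullet> col (?r (src Q b)) j"
        using i j cY by (simp add: col_retr0)
      also have "\<dots> = (snd Y b * ?r (src Q b)) $$ (i, j)" using i j cY by simp
      finally show "(?r (tgt Q b) * T) $$ (i, j) = (snd Y b * ?r (src Q b)) $$ (i, j)" .
    qed (use cT cY in auto)
    thus "?r (tgt Q b) * snd (fst (trivial_ext 1 X Y) ! 0) b = snd Y b * ?r (src Q b)"
      unfolding tw0_arr[OF Y X b] T_def .
  qed
  fix v assume v: "v \<in> verts Q"
  have "?r v * iota (fst Y v) (fst X v) = 1\<^sub>m (fst Y v)"
  proof (rule eq_matI)
    fix i j assume "i < dim_row (1\<^sub>m (fst Y v) :: 'k mat)" "j < dim_col (1\<^sub>m (fst Y v) :: 'k mat)"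
    hence i: "i < fst Y v" and j: "j < fst Y v" by auto
    have "(?r v * iota (fst Y v) (fst X v)) $$ (i, j) = unit_vec (fst Y v + fst X v) i \<bullet> unit_vec (fst Y v + fst X v) j"
      using i j by (simp add: row_retr0 col_iota)
    also have "\<dots> = unit_vec (fst Y v + fst X v) i $ j" using i j by (intro scalar_prod_right_unit) auto
    also have "\<dots> = (1\<^sub>m (fst Y v) :: 'k mat) $$ (i, j)" using i j by simp
    finally show "(?r v * iota (fst Y v) (fst X v)) $$ (i, j) = (1\<^sub>m (fst Y v) :: 'k mat) $$ (i, j)" .
  qed auto
  thus "?r v * (snd (trivial_ext 1 X Y) ! 0) v = 1\<^sub>m (fst Y v)" unfolding triv1_maps by simp
qed


definition arrl :: "('v,'a) quiver \<Rightarrow> 'a list" where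
  "arrl Q = (SOME xs. set xs = arrs Q \<and> distinct xs)"

lemma arrl_props: "finite (arrs Q) \<Longrightarrow> set (arrl Q) = arrs Q \<and> distinct (arrl Q)"
  unfolding arrl_def by (rule someI_ex) (rule finite_distinct_list)

definition pb :: "('v,'a) quiver \<Rightarrow> 'v \<Rightarrow> 'v \<Rightarrow> 'a option list" where
  "pb Q w z = (if z = w then [None] else []) @ map Some (filter (\<lambda>a. src Q a = w \<and> tgt Q a = z) (arrl Q))"

definition ib :: "('v,'a) quiver \<Rightarrow> 'v \<Rightarrow> 'v \<Rightarrow> 'a option list" where
  "ib Q v z = (if z = v then [None] else []) @ map Some (filter (\<lambda>a. src Q a = z \<and> tgt Q a = v) (arrl Q))"

lemma pb_distinct: "finite (arrs Q) \<Longrightarrow> distinct (pb Q w z)"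
  using arrl_props[of Q] by (auto simp: pb_def distinct_map)

lemma ib_distinct: "finite (arrs Q) \<Longrightarrow> distinct (ib Q v z)"
  using arrl_props[of Q] by (auto simp: ib_def distinct_map)

lemma pb_Some: "finite (arrs Q) \<Longrightarrow> Some a \<in> set (pb Q w z) \<longleftrightarrow> a \<in> arrs Q \<and> src Q a = w \<and> tgt Q a = z"
  using arrl_props[of Q] by (auto simp: pb_def)

lemma ib_Some: "finite (arrs Q) \<Longrightarrow> Some a \<in> set (ib Q v z) \<longleftrightarrow> a \<in> arrs Q \<and> src Q a = z \<and> tgt Q a = v"
  using arrl_props[of Q] by (auto simp: ib_def)

lemma pb_None: "None \<in> set (pb Q w z) \<longleftrightarrow> z = w"
  by (auto simp: pb_def)

lemma ib_None: "None \<in> set (ib Q v z) \<longleftrightarrow> z = v"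
  by (auto simp: ib_def)

lemma pb_0: "pb Q w w ! 0 = None" "0 < length (pb Q w w)" by (auto simp: pb_def)
lemma ib_0: "ib Q v v ! 0 = None" "0 < length (ib Q v v)" by (auto simp: ib_def)

lemma distinct_nth_eq: "distinct xs \<Longrightarrow> i < length xs \<Longrightarrow> j < length xs \<Longrightarrow> xs ! i = xs ! j \<Longrightarrow> i = j"
  using nth_eq_iff_index_eq by blast

lemma pb_nth_None: "finite (arrs Q) \<Longrightarrow> i < length (pb Q w z) \<Longrightarrow> pb Q w z ! i = None \<Longrightarrow> z = w \<and> i = 0"
proof -
  assume f: "finite (arrs Q)" and i: "i < length (pb Q w z)" and n: "pb Q w z ! i = None"
  have zw: "z = w" using nth_mem[OF i] n pb_None by metis
  hence "pb Q w z ! i = pb Q w z ! 0" using n by (simp add: pb_0)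
  moreover have "0 < length (pb Q w z)" using zw pb_0(2)[of Q w] by simp
  ultimately have "i = 0" using distinct_nth_eq[OF pb_distinct[OF f] i, of 0] by blast
  thus ?thesis using zw by simp
qed

lemma ib_nth_None: "finite (arrs Q) \<Longrightarrow> i < length (ib Q v z) \<Longrightarrow> ib Q v z ! i = None \<Longrightarrow> z = v \<and> i = 0"
proof -
  assume f: "finite (arrs Q)" and i: "i < length (ib Q v z)" and n: "ib Q v z ! i = None"
  have zw: "z = v" using nth_mem[OF i] n ib_None by metis
  hence "ib Q v z ! i = ib Q v z ! 0" using n by (simp add: ib_0)
  moreover have "0 < length (ib Q v z)" using zw ib_0(2)[of Q v] by simp
  ultimately have "i = 0" using distinct_nth_eq[OF ib_distinct[OF f] i, of 0] by blast
  thus ?thesis using zw by simp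
qed

lemma pb_nth_Some: "finite (arrs Q) \<Longrightarrow> i < length (pb Q w z) \<Longrightarrow> pb Q w z ! i = Some a \<Longrightarrow> a \<in> arrs Q \<and> src Q a = w \<and> tgt Q a = z"
  using nth_mem pb_Some by metis

lemma ib_nth_Some: "finite (arrs Q) \<Longrightarrow> i < length (ib Q v z) \<Longrightarrow> ib Q v z ! i = Some a \<Longrightarrow> a \<in> arrs Q \<and> src Q a = z \<and> tgt Q a = v"
  using nth_mem ib_Some by metis

lemma idx_ex: "x \<in> set xs \<Longrightarrow> \<exists>k<length xs. xs ! k = x"
  by (simp add: in_set_conv_nth)

definition Prep :: "('v,'a) quiver \<Rightarrow> 'v \<Rightarrow> ('v,'a,'k::field) rep" where
  "Prep Q w = (\<lambda>z. if z \<in> verts Q then length (pb Q w z) else 0,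
     \<lambda>b. mat (length (pb Q w (tgt Q b))) (length (pb Q w (src Q b)))
        (\<lambda>(i,j). if pb Q w (src Q b) ! j = None \<and> pb Q w (tgt Q b) ! i = Some b then 1 else 0))"

definition Irep :: "('v,'a) quiver \<Rightarrow> 'v \<Rightarrow> ('v,'a,'k::field) rep" where
  "Irep Q v = (\<lambda>z. if z \<in> verts Q then length (ib Q v z) else 0,
     \<lambda>b. mat (length (ib Q v (tgt Q b))) (length (ib Q v (src Q b)))
        (\<lambda>(i,j). if ib Q v (src Q b) ! j = Some b \<and> ib Q v (tgt Q b) ! i = None then 1 else 0))"

lemma mult_zero_entries:
  fixes A B :: "'k::field mat"
  assumes A: "A \<in> carrier_mat r n" and B: "B \<in> carrier_mat n c"
    and z: "\<And>i j k. i < r \<Longrightarrow> j < c \<Longrightarrow> k < n \<Longrightarrow> A $$ (i,k) * B $$ (k,j) = 0"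
  shows "A * B = 0\<^sub>m r c"
proof (rule eq_matI)
  fix i j assume "i < dim_row (0\<^sub>m r c :: 'k mat)" "j < dim_col (0\<^sub>m r c :: 'k mat)"
  hence i: "i < r" and j: "j < c" by auto
  have "(A * B) $$ (i, j) = (\<Sum>k\<in>{0..<n}. A $$ (i,k) * B $$ (k,j))"
    using A B i j by (simp add: scalar_prod_def)
  also have "\<dots> = 0" using z i j by (intro sum.neutral) auto
  finally show "(A * B) $$ (i, j) = 0\<^sub>m r c $$ (i, j)" using i j by simp
qed (use A B in auto)

lemma fq_wf: "finite_quiver Q \<Longrightarrow> \<forall>b\<in>arrs Q. src Q b \<in> verts Q \<and> tgt Q b \<in> verts Q"
  unfolding finite_quiver_def by auto

lemma Prep_arr: "finite_quiver Q \<Longrightarrow> b \<in> arrs Q \<Longrightarrow>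
  snd (Prep Q w :: ('v,'a,'k::field) rep) b \<in> carrier_mat (fst (Prep Q w :: ('v,'a,'k) rep) (tgt Q b)) (fst (Prep Q w :: ('v,'a,'k) rep) (src Q b))"
  using fq_wf by (fastforce simp: Prep_def)

lemma Irep_arr: "finite_quiver Q \<Longrightarrow> b \<in> arrs Q \<Longrightarrow>
  snd (Irep Q v :: ('v,'a,'k::field) rep) b \<in> carrier_mat (fst (Irep Q v :: ('v,'a,'k) rep) (tgt Q b)) (fst (Irep Q v :: ('v,'a,'k) rep) (src Q b))"
  using fq_wf by (fastforce simp: Irep_def)

lemma Prep_rep: "finite_quiver Q \<Longrightarrow> is_rep Q (Prep Q w :: ('v,'a,'k::field) rep)"
  unfolding is_rep_def
proof (intro conjI allI impI ballI)
  assume fq: "finite_quiver Q"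
  show "v \<notin> verts Q \<Longrightarrow> fst (Prep Q w :: ('v,'a,'k) rep) v = 0" for v by (simp add: Prep_def)
  show "b \<in> arrs Q \<Longrightarrow> snd (Prep Q w :: ('v,'a,'k) rep) b \<in> carrier_mat (fst (Prep Q w :: ('v,'a,'k) rep) (tgt Q b)) (fst (Prep Q w :: ('v,'a,'k) rep) (src Q b))" for b
    by (rule Prep_arr[OF fq])
  fix b c assume b: "b \<in> arrs Q" and c: "c \<in> arrs Q" and bc: "tgt Q b = src Q c"
  have vs: "tgt Q c \<in> verts Q" "src Q b \<in> verts Q" using fq_wf[OF fq] b c by auto
  show "snd (Prep Q w :: ('v,'a,'k) rep) c * snd (Prep Q w) b = 0\<^sub>m (fst (Prep Q w :: ('v,'a,'k) rep) (tgt Q c)) (fst (Prep Q w :: ('v,'a,'k) rep) (src Q b))"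
    using vs unfolding Prep_def fst_conv snd_conv
    by (intro mult_zero_entries[where n = "length (pb Q w (src Q c))"]) (auto simp: bc)
qed

lemma Irep_rep: "finite_quiver Q \<Longrightarrow> is_rep Q (Irep Q v :: ('v,'a,'k::field) rep)"
  unfolding is_rep_def
proof (intro conjI allI impI ballI)
  assume fq: "finite_quiver Q"
  show "z \<notin> verts Q \<Longrightarrow> fst (Irep Q v :: ('v,'a,'k) rep) z = 0" for z by (simp add: Irep_def)
  show "b \<in> arrs Q \<Longrightarrow> snd (Irep Q v :: ('v,'a,'k) rep) b \<in> carrier_mat (fst (Irep Q v :: ('v,'a,'k) rep) (tgt Q b)) (fst (Irep Q v :: ('v,'a,'k) rep) (src Q b))" for b
    by (rule Irep_arr[OF fq])
  fix b c assume b: "b \<in> arrs Q" and c: "c \<in> arrs Q" and bc: "tgt Q b = src Q c"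
  have vs: "tgt Q c \<in> verts Q" "src Q b \<in> verts Q" using fq_wf[OF fq] b c by auto
  show "snd (Irep Q v :: ('v,'a,'k) rep) c * snd (Irep Q v) b = 0\<^sub>m (fst (Irep Q v :: ('v,'a,'k) rep) (tgt Q c)) (fst (Irep Q v :: ('v,'a,'k) rep) (src Q b))"
    using vs unfolding Irep_def fst_conv snd_conv
    by (intro mult_zero_entries[where n = "length (ib Q v (src Q c))"]) (auto simp: bc)
qed


lemma mult_col_unit:
  fixes A B :: "'k::field mat"
  assumes A: "A \<in> carrier_mat r n" and B: "B \<in> carrier_mat n c" and i: "i < r" and j: "j < c" and k: "k < n"
    and u: "\<And>m. m < n \<Longrightarrow> B $$ (m, j) = (if m = k then 1 else 0)"
  shows "(A * B) $$ (i, j) = A $$ (i, k)"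
proof -
  have "col B j = unit_vec n k" using B j u by (intro eq_vecI) (auto simp: unit_vec_def)
  hence "(A * B) $$ (i, j) = row A i \<bullet> unit_vec n k" using A B i j by simp
  also have "\<dots> = A $$ (i, k)" using A i k by (simp add: scalar_prod_right_unit)
  finally show ?thesis .
qed

lemma mult_row_unit:
  fixes A B :: "'k::field mat"
  assumes A: "A \<in> carrier_mat r n" and B: "B \<in> carrier_mat n c" and i: "i < r" and j: "j < c" and k: "k < n"
    and u: "\<And>m. m < n \<Longrightarrow> A $$ (i, m) = (if m = k then 1 else 0)"
  shows "(A * B) $$ (i, j) = B $$ (k, j)"
proof -
  have "row A i = unit_vec n k" using A i u by (intro eq_vecI) (auto simp: unit_vec_def)
  hence "(A * B) $$ (i, j) = unit_vec n k \<bullet> col B j" using A B i j by simp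
  also have "\<dots> = B $$ (k, j)" using B j k by (subst scalar_prod_left_unit) auto
  finally show ?thesis .
qed

lemma mult_col_zero:
  fixes A B :: "'k::field mat"
  assumes A: "A \<in> carrier_mat r n" and B: "B \<in> carrier_mat n c" and i: "i < r" and j: "j < c"
    and u: "\<And>m. m < n \<Longrightarrow> B $$ (m, j) = 0"
  shows "(A * B) $$ (i, j) = 0"
proof -
  have "col B j = 0\<^sub>v n" using B j u by (intro eq_vecI) auto
  thus ?thesis using A B i j by simp
qed

lemma mult_row_zero:
  fixes A B :: "'k::field mat"
  assumes A: "A \<in> carrier_mat r n" and B: "B \<in> carrier_mat n c" and i: "i < r" and j: "j < c"
    and u: "\<And>m. m < n \<Longrightarrow> A $$ (i, m) = 0"
  shows "(A * B) $$ (i, j) = 0"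
proof -
  have "row A i = 0\<^sub>v n" using A i u by (intro eq_vecI) auto
  thus ?thesis using A B i j by simp
qed

lemma unique_idx:
  assumes d: "distinct xs" and x: "x \<in> set xs"
  obtains k where "k < length xs" "xs ! k = x" "\<And>m. m < length xs \<Longrightarrow> xs ! m = x \<longleftrightarrow> m = k"
proof -
  obtain k where k: "k < length xs" "xs ! k = x" using x by (auto simp: in_set_conv_nth)
  show ?thesis
    by (rule that[OF k]) (use k d distinct_nth_eq in blast)
qed

lemma Prep_dim: "z \<in> verts Q \<Longrightarrow> fst (Prep Q w :: ('v,'a,'k::field) rep) z = length (pb Q w z)"
  by (simp add: Prep_def)

lemma Irep_dim: "z \<in> verts Q \<Longrightarrow> fst (Irep Q v :: ('v,'a,'k::field) rep) z = length (ib Q v z)"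
  by (simp add: Irep_def)

lemma Prep_entry: "i < length (pb Q w (tgt Q b)) \<Longrightarrow> j < length (pb Q w (src Q b)) \<Longrightarrow>
  snd (Prep Q w :: ('v,'a,'k::field) rep) b $$ (i, j) = (if pb Q w (src Q b) ! j = None \<and> pb Q w (tgt Q b) ! i = Some b then 1 else 0)"
  by (simp add: Prep_def)

lemma Irep_entry: "i < length (ib Q v (tgt Q b)) \<Longrightarrow> j < length (ib Q v (src Q b)) \<Longrightarrow>
  snd (Irep Q v :: ('v,'a,'k::field) rep) b $$ (i, j) = (if ib Q v (src Q b) ! j = Some b \<and> ib Q v (tgt Q b) ! i = None then 1 else 0)"
  by (simp add: Irep_def)

lemma Prep_carrier: "b \<in> arrs Q \<Longrightarrow> snd (Prep Q w :: ('v,'a,'k::field) rep) b \<in> carrier_mat (length (pb Q w (tgt Q b))) (length (pb Q w (src Q b)))"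
  by (simp add: Prep_def)

lemma Irep_carrier: "b \<in> arrs Q \<Longrightarrow> snd (Irep Q v :: ('v,'a,'k::field) rep) b \<in> carrier_mat (length (ib Q v (tgt Q b))) (length (ib Q v (src Q b)))"
  by (simp add: Irep_def)

lemma Prep_proj_like:
  assumes fq: "finite_quiver Q" and w: "w \<in> verts Q"
  shows "proj_like Q (Prep Q w :: ('v,'a,'k::field) rep)"
  unfolding proj_like_def
proof (intro allI impI)
  fix E :: "('v,'a,'k) rep" and p
  assume E: "is_rep Q E" and p: "is_hom Q E (Prep Q w) p"
    and surj: "\<forall>v\<in>verts Q. \<forall>y\<in>carrier_vec (fst (Prep Q w :: ('v,'a,'k) rep) v). \<exists>x\<in>carrier_vec (fst E v). p v *\<^sub>v x = y"
  let ?P = "Prep Q w :: ('v,'a,'k) rep"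
  have fa: "finite (arrs Q)" using fq by (simp add: finite_quiver_def)
  have wf: "\<forall>b\<in>arrs Q. src Q b \<in> verts Q \<and> tgt Q b \<in> verts Q" by (rule fq_wf[OF fq])
  obtain e where e: "e \<in> carrier_vec (fst E w)" and pe: "p w *\<^sub>v e = unit_vec (length (pb Q w w)) 0"
    using surj w Prep_dim[OF w, of w] by (metis unit_vec_carrier)
  define s where "s = (\<lambda>z. mat (fst E z) (fst ?P z) (\<lambda>(i,j). case pb Q w z ! j of None \<Rightarrow> e $ i | Some a \<Rightarrow> (snd E a *\<^sub>v e) $ i))"
  have cs: "s z \<in> carrier_mat (fst E z) (fst ?P z)" for z by (simp add: s_def)
  have col_s: "col (s z) j = (case pb Q w z ! j of None \<Rightarrow> e | Some a \<Rightarrow> snd E a *\<^sub>v e)"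
    if z: "z \<in> verts Q" and j: "j < length (pb Q w z)" for z j
  proof (cases "pb Q w z ! j")
    case None
    hence "z = w" using pb_nth_None[OF fa j] by simp
    thus ?thesis using None e j z by (intro eq_vecI) (auto simp: s_def Prep_dim)
  next
    case (Some a)
    hence a: "a \<in> arrs Q" "tgt Q a = z" using pb_nth_Some[OF fa j] by auto
    have "dim_row (snd E a) = fst E z" using is_rep_carrier[OF E a(1)] a by simp
    thus ?thesis using Some e j z by (intro eq_vecI) (auto simp: s_def Prep_dim)
  qed
  show "\<exists>s. is_hom Q ?P E s \<and> (\<forall>v\<in>verts Q. p v * s v = 1\<^sub>m (fst ?P v))"
  proof (intro exI conjI ballI)
    show "is_hom Q ?P E s"
      unfolding is_hom_def
    proof (intro conjI ballI)
      fix v show "s v \<in> carrier_mat (fst E v) (fst ?P v)" by (rule cs)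
    next
      fix b assume b: "b \<in> arrs Q"
      have t: "tgt Q b \<in> verts Q" and sr: "src Q b \<in> verts Q" using wf b by auto
      note cEb = is_rep_carrier[OF E b]
      have cPb: "snd ?P b \<in> carrier_mat (length (pb Q w (tgt Q b))) (length (pb Q w (src Q b)))" by (rule Prep_carrier[OF b])
      have cst: "s (tgt Q b) \<in> carrier_mat (fst E (tgt Q b)) (length (pb Q w (tgt Q b)))" using cs Prep_dim[OF t] by metis
      have css: "s (src Q b) \<in> carrier_mat (fst E (src Q b)) (length (pb Q w (src Q b)))" using cs Prep_dim[OF sr] by metis
      show "s (tgt Q b) * snd ?P b = snd E b * s (src Q b)"
      proof (rule eq_matI)
        fix i j assume "i < dim_row (snd E b * s (src Q b))" "j < dim_col (snd E b * s (src Q b))"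
        hence i: "i < fst E (tgt Q b)" and j: "j < length (pb Q w (src Q b))" using cEb css by auto
        have rhs: "(snd E b * s (src Q b)) $$ (i, j) = row (snd E b) i \<bullet> col (s (src Q b)) j"
          using cEb css i j by simp
        show "(s (tgt Q b) * snd ?P b) $$ (i, j) = (snd E b * s (src Q b)) $$ (i, j)"
        proof (cases "pb Q w (src Q b) ! j")
          case None
          hence sw: "src Q b = w" using pb_nth_None[OF fa j] by simp
          have "Some b \<in> set (pb Q w (tgt Q b))" using pb_Some[OF fa] b sw by simp
          then obtain kb where kb: "kb < length (pb Q w (tgt Q b))" "pb Q w (tgt Q b) ! kb = Some b"
            and ku: "\<And>m. m < length (pb Q w (tgt Q b)) \<Longrightarrow> pb Q w (tgt Q b) ! m = Some b \<longleftrightarrow> m = kb"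
            using unique_idx[OF pb_distinct[OF fa]] by metis
          have "(s (tgt Q b) * snd ?P b) $$ (i, j) = s (tgt Q b) $$ (i, kb)"
            by (rule mult_col_unit[OF cst cPb i j kb(1)]) (use None ku j in \<open>simp add: Prep_entry\<close>)
          also have "\<dots> = (snd E b *\<^sub>v e) $ i" using kb i by (simp add: s_def Prep_dim[OF t])
          also have "\<dots> = row (snd E b) i \<bullet> e" using cEb i by simp
          also have "\<dots> = (snd E b * s (src Q b)) $$ (i, j)" unfolding rhs col_s[OF sr j] using None by simp
          finally show ?thesis .
        next
          case (Some a)
          hence a: "a \<in> arrs Q" "src Q a = w" "tgt Q a = src Q b" using pb_nth_Some[OF fa j] by auto
          have "(s (tgt Q b) * snd ?P b) $$ (i, j) = 0"
            by (rule mult_col_zero[OF cst cPb i j]) (use Some j in \<open>simp add: Prep_entry\<close>)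
          moreover have "(snd E b * s (src Q b)) $$ (i, j) = 0"
          proof -
            have EE: "snd E b * snd E a = 0\<^sub>m (fst E (tgt Q b)) (fst E (src Q a))" using E a b unfolding is_rep_def by auto
            have cEa: "snd E a \<in> carrier_mat (fst E (tgt Q a)) (fst E (src Q a))" by (rule is_rep_carrier[OF E a(1)])
            have "(snd E b * s (src Q b)) $$ (i, j) = row (snd E b) i \<bullet> (snd E a *\<^sub>v e)"
              unfolding rhs col_s[OF sr j] using Some by simp
            also have "\<dots> = (snd E b *\<^sub>v (snd E a *\<^sub>v e)) $ i" using cEb i by simp
            also have "snd E b *\<^sub>v (snd E a *\<^sub>v e) = (snd E b * snd E a) *\<^sub>v e"
              using cEb cEa e a by simp
            also have "\<dots> = 0\<^sub>v (fst E (tgt Q b))" using EE e a by simp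
            finally show ?thesis using i by simp
          qed
          ultimately show ?thesis by simp
        qed
      qed (use cst cPb cEb css in auto)
    qed
  next
    fix z assume z: "z \<in> verts Q"
    note cpz = hom_carrier[OF p z]
    have dz: "fst ?P z = length (pb Q w z)" by (rule Prep_dim[OF z])
    have csz: "s z \<in> carrier_mat (fst E z) (length (pb Q w z))" using cs Prep_dim[OF z] by metis
    have cpz': "p z \<in> carrier_mat (length (pb Q w z)) (fst E z)" using cpz Prep_dim[OF z] by metis
    show "p z * s z = 1\<^sub>m (fst ?P z)"
    proof (rule eq_matI)
      fix i j assume "i < dim_row (1\<^sub>m (fst ?P z) :: 'k mat)" "j < dim_col (1\<^sub>m (fst ?P z) :: 'k mat)"
      hence i: "i < length (pb Q w z)" and j: "j < length (pb Q w z)" using dz by auto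
      have "(p z * s z) $$ (i, j) = (p z *\<^sub>v col (s z) j) $ i" using cpz' csz i j by simp
      also have "\<dots> = (if i = j then 1 else 0)"
      proof (cases "pb Q w z ! j")
        case None
        hence zj: "z = w" "j = 0" using pb_nth_None[OF fa j] by auto
        thus ?thesis using None pe i pb_0(2)[of Q w] unfolding col_s[OF z j] by (simp add: unit_vec_def)
      next
        case (Some a)
        hence a: "a \<in> arrs Q" "src Q a = w" "tgt Q a = z" using pb_nth_Some[OF fa j] by auto
        have cEa: "snd E a \<in> carrier_mat (fst E z) (fst E w)" using is_rep_carrier[OF E a(1)] a by simp
        have cPa: "snd ?P a \<in> carrier_mat (length (pb Q w z)) (length (pb Q w w))" using Prep_carrier[OF a(1)] a by simp
        have cpw: "p w \<in> carrier_mat (length (pb Q w w)) (fst E w)" using hom_carrier[OF p w] Prep_dim[OF w] by metis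
        have "p z *\<^sub>v (snd E a *\<^sub>v e) = (p z * snd E a) *\<^sub>v e" using cpz' cEa e by simp
        also have "p z * snd E a = snd ?P a * p w" using hom_comm[OF p a(1)] a by simp
        also have "(snd ?P a * p w) *\<^sub>v e = snd ?P a *\<^sub>v unit_vec (length (pb Q w w)) 0"
          using cPa cpw e pe by simp
        also have "\<dots> = col (snd ?P a) 0" by (rule mat_vec_unit[OF cPa pb_0(2)])
        finally have "(p z *\<^sub>v (snd E a *\<^sub>v e)) $ i = snd ?P a $$ (i, 0)" using cPa i pb_0(2)[of Q w] by simp
        also have "\<dots> = (if pb Q w (src Q a) ! 0 = None \<and> pb Q w (tgt Q a) ! i = Some a then 1 else 0)"
          by (rule Prep_entry) (use i a pb_0(2)[of Q w] in auto)
        also have "\<dots> = (if pb Q w z ! i = Some a then 1 else 0)"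
          using a by (simp add: pb_0)
        also have "\<dots> = (if i = j then 1 else 0)"
        proof -
          have "pb Q w z ! i = Some a \<longleftrightarrow> i = j"
            using distinct_nth_eq[OF pb_distinct[OF fa] i j] Some by metis
          thus ?thesis by simp
        qed
        finally show ?thesis unfolding col_s[OF z j] using Some by simp
      qed
      also have "\<dots> = (1\<^sub>m (fst ?P z) :: 'k mat) $$ (i, j)" using i j dz by simp
      finally show "(p z * s z) $$ (i, j) = (1\<^sub>m (fst ?P z) :: 'k mat) $$ (i, j)" .
    qed (use cpz' csz dz in auto)
  qed
qed

lemma Irep_inj_like:
  assumes fq: "finite_quiver Q" and v: "v \<in> verts Q"
  shows "inj_like Q (Irep Q v :: ('v,'a,'k::field) rep)"
  unfolding inj_like_def
proof (intro allI impI)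
  fix E :: "('v,'a,'k) rep" and g
  assume E: "is_rep Q E" and g: "is_hom Q (Irep Q v) E g"
    and inj: "\<forall>z\<in>verts Q. \<forall>y\<in>carrier_vec (fst (Irep Q v :: ('v,'a,'k) rep) z). g z *\<^sub>v y = 0\<^sub>v (fst E z) \<longrightarrow> y = 0\<^sub>v (fst (Irep Q v :: ('v,'a,'k) rep) z)"
  let ?I = "Irep Q v :: ('v,'a,'k) rep"
  have fa: "finite (arrs Q)" using fq by (simp add: finite_quiver_def)
  have wf: "\<forall>b\<in>arrs Q. src Q b \<in> verts Q \<and> tgt Q b \<in> verts Q" by (rule fq_wf[OF fq])
  have dv: "fst ?I v = length (ib Q v v)" by (rule Irep_dim[OF v])
  have cgv: "g v \<in> carrier_mat (fst E v) (length (ib Q v v))" using hom_carrier[OF g v] dv by simp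
  have injv: "x = 0\<^sub>v (length (ib Q v v))" if "x \<in> carrier_vec (length (ib Q v v))" "g v *\<^sub>v x = 0\<^sub>v (fst E v)" for x
    using inj v dv that by auto
  obtain L where cL: "L \<in> carrier_mat (length (ib Q v v)) (fst E v)" and Lg: "L * g v = 1\<^sub>m (length (ib Q v v))"
    using left_inverse_mat[OF cgv injv] by blast
  have l0: "0 < length (ib Q v v)" by (rule ib_0(2))
  define r where "r = (\<lambda>z. mat (fst ?I z) (fst E z) (\<lambda>(i,k). case ib Q v z ! i of None \<Rightarrow> L $$ (0,k) | Some a \<Rightarrow> (L * snd E a) $$ (0,k)))"
  have cr: "r z \<in> carrier_mat (fst ?I z) (fst E z)" for z by (simp add: r_def)
  have row_r: "row (r z) i = (case ib Q v z ! i of None \<Rightarrow> row L 0 | Some a \<Rightarrow> row (L * snd E a) 0)"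
    if z: "z \<in> verts Q" and i: "i < length (ib Q v z)" for z i
  proof (cases "ib Q v z ! i")
    case None
    hence "z = v" using ib_nth_None[OF fa i] by simp
    thus ?thesis using None cL i z l0 by (intro eq_vecI) (auto simp: r_def Irep_dim)
  next
    case (Some a)
    hence a: "a \<in> arrs Q" "src Q a = z" "tgt Q a = v" using ib_nth_Some[OF fa i] by auto
    have cEa: "snd E a \<in> carrier_mat (fst E v) (fst E z)" using is_rep_carrier[OF E a(1)] a by simp
    thus ?thesis using Some cL i z l0 by (intro eq_vecI) (auto simp: r_def Irep_dim)
  qed
  show "\<exists>r. is_hom Q E ?I r \<and> (\<forall>z\<in>verts Q. r z * g z = 1\<^sub>m (fst ?I z))"
  proof (intro exI conjI ballI)
    show "is_hom Q E ?I r"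
      unfolding is_hom_def
    proof (intro conjI ballI)
      fix z show "r z \<in> carrier_mat (fst ?I z) (fst E z)" by (rule cr)
    next
      fix b assume b: "b \<in> arrs Q"
      have t: "tgt Q b \<in> verts Q" and sr: "src Q b \<in> verts Q" using wf b by auto
      note cEb = is_rep_carrier[OF E b]
      have cIb: "snd ?I b \<in> carrier_mat (length (ib Q v (tgt Q b))) (length (ib Q v (src Q b)))" by (rule Irep_carrier[OF b])
      have crt: "r (tgt Q b) \<in> carrier_mat (length (ib Q v (tgt Q b))) (fst E (tgt Q b))" using cr Irep_dim[OF t] by metis
      have crs: "r (src Q b) \<in> carrier_mat (length (ib Q v (src Q b))) (fst E (src Q b))" using cr Irep_dim[OF sr] by metis
      show "r (tgt Q b) * snd E b = snd ?I b * r (src Q b)"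
      proof (rule eq_matI)
        fix i k assume "i < dim_row (snd ?I b * r (src Q b))" "k < dim_col (snd ?I b * r (src Q b))"
        hence i: "i < length (ib Q v (tgt Q b))" and k: "k < fst E (src Q b)" using cIb crs by auto
        have lhs: "(r (tgt Q b) * snd E b) $$ (i, k) = row (r (tgt Q b)) i \<bullet> col (snd E b) k"
          using cEb crt i k by simp
        show "(r (tgt Q b) * snd E b) $$ (i, k) = (snd ?I b * r (src Q b)) $$ (i, k)"
        proof (cases "ib Q v (tgt Q b) ! i")
          case None
          hence tv: "tgt Q b = v" using ib_nth_None[OF fa i] by simp
          have "Some b \<in> set (ib Q v (src Q b))" using ib_Some[OF fa] b tv by simp
          then obtain mb where mb: "mb < length (ib Q v (src Q b))" "ib Q v (src Q b) ! mb = Some b"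
            and mu: "\<And>m. m < length (ib Q v (src Q b)) \<Longrightarrow> ib Q v (src Q b) ! m = Some b \<longleftrightarrow> m = mb"
            using unique_idx[OF ib_distinct[OF fa]] by metis
          have "(snd ?I b * r (src Q b)) $$ (i, k) = r (src Q b) $$ (mb, k)"
            by (rule mult_row_unit[OF cIb crs i k mb(1)]) (use None mu i in \<open>simp add: Irep_entry\<close>)
          also have "\<dots> = (L * snd E b) $$ (0, k)" using mb k by (simp add: r_def Irep_dim[OF sr])
          also have "\<dots> = row L 0 \<bullet> col (snd E b) k" using cL cEb k l0 tv by simp
          also have "\<dots> = (r (tgt Q b) * snd E b) $$ (i, k)" unfolding lhs row_r[OF t i] using None by simp
          finally show ?thesis by simp
        next
          case (Some a)
          hence a: "a \<in> arrs Q" "src Q a = tgt Q b" "tgt Q a = v" using ib_nth_Some[OF fa i] by auto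
          have "(snd ?I b * r (src Q b)) $$ (i, k) = 0"
            by (rule mult_row_zero[OF cIb crs i k]) (use Some i in \<open>simp add: Irep_entry\<close>)
          moreover have "(r (tgt Q b) * snd E b) $$ (i, k) = 0"
          proof -
            have EE: "snd E a * snd E b = 0\<^sub>m (fst E (tgt Q a)) (fst E (src Q b))" using E a b unfolding is_rep_def by auto
            have cEa: "snd E a \<in> carrier_mat (fst E v) (fst E (tgt Q b))" using is_rep_carrier[OF E a(1)] a by simp
            have "(r (tgt Q b) * snd E b) $$ (i, k) = row (L * snd E a) 0 \<bullet> col (snd E b) k"
              unfolding lhs row_r[OF t i] using Some by simp
            also have "\<dots> = ((L * snd E a) * snd E b) $$ (0, k)"
              by (rule sym, rule index_mult_mat(1)) (use cL cEa cEb k l0 in auto)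
            also have "(L * snd E a) * snd E b = L * (snd E a * snd E b)" using cL cEa cEb by simp
            also have "\<dots> = 0\<^sub>m (length (ib Q v v)) (fst E (src Q b))" using EE cL a by simp
            finally show ?thesis using k l0 by simp
          qed
          ultimately show ?thesis by simp
        qed
      qed (use crt cIb cEb crs in auto)
    qed
  next
    fix z assume z: "z \<in> verts Q"
    have dz: "fst ?I z = length (ib Q v z)" by (rule Irep_dim[OF z])
    have cgz: "g z \<in> carrier_mat (fst E z) (length (ib Q v z))" using hom_carrier[OF g z] dz by metis
    have crz: "r z \<in> carrier_mat (length (ib Q v z)) (fst E z)" using cr dz by metis
    show "r z * g z = 1\<^sub>m (fst ?I z)"
    proof (rule eq_matI)
      fix i j assume "i < dim_row (1\<^sub>m (fst ?I z) :: 'k mat)" "j < dim_col (1\<^sub>m (fst ?I z) :: 'k mat)"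
      hence i: "i < length (ib Q v z)" and j: "j < length (ib Q v z)" using dz by auto
      have "(r z * g z) $$ (i, j) = row (r z) i \<bullet> col (g z) j" using crz cgz i j by simp
      also have "\<dots> = (if i = j then 1 else 0)"
      proof (cases "ib Q v z ! i")
        case None
        hence zi: "z = v" "i = 0" using ib_nth_None[OF fa i] by auto
        have "row L 0 \<bullet> col (g v) j = (L * g v) $$ (0, j)" using cL cgv j l0 zi by simp
        also have "\<dots> = (if i = j then 1 else 0)" using Lg j zi l0 by auto
        finally show ?thesis unfolding row_r[OF z i] using None zi by simp
      next
        case (Some a)
        hence a: "a \<in> arrs Q" "src Q a = z" "tgt Q a = v" using ib_nth_Some[OF fa i] by auto
        have cEa: "snd E a \<in> carrier_mat (fst E v) (fst E z)" using is_rep_carrier[OF E a(1)] a by simp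
        have cIa: "snd ?I a \<in> carrier_mat (length (ib Q v v)) (length (ib Q v z))" using Irep_carrier[OF a(1)] a by simp
        have "row (L * snd E a) 0 \<bullet> col (g z) j = ((L * snd E a) * g z) $$ (0, j)"
          by (rule sym, rule index_mult_mat(1)) (use cL cEa cgz j l0 in auto)
        also have "(L * snd E a) * g z = L * (snd E a * g z)" using cL cEa cgz by simp
        also have "snd E a * g z = g v * snd ?I a" using hom_comm[OF g a(1)] a by simp
        also have "L * (g v * snd ?I a) = (L * g v) * snd ?I a" using cL cgv cIa by simp
        also have "\<dots> = snd ?I a" using Lg cIa by simp
        finally have "row (L * snd E a) 0 \<bullet> col (g z) j = snd ?I a $$ (0, j)" .
        also have "\<dots> = (if ib Q v (src Q a) ! j = Some a \<and> ib Q v (tgt Q a) ! 0 = None then 1 else 0)"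
          by (rule Irep_entry) (use j a l0 in auto)
        also have "\<dots> = (if ib Q v z ! j = Some a then 1 else 0)" using a by (simp add: ib_0)
        also have "\<dots> = (if i = j then 1 else 0)"
        proof -
          have "ib Q v z ! j = Some a \<longleftrightarrow> i = j"
            using distinct_nth_eq[OF ib_distinct[OF fa] i j] Some by metis
          thus ?thesis by simp
        qed
        finally show ?thesis unfolding row_r[OF z i] using Some by simp
      qed
      also have "\<dots> = (1\<^sub>m (fst ?I z) :: 'k mat) $$ (i, j)" using i j dz by simp
      finally show "(r z * g z) $$ (i, j) = (1\<^sub>m (fst ?I z) :: 'k mat) $$ (i, j)" .
    qed (use crz cgz dz in auto)
  qed
qed


definition twD :: "('v,'a) quiver \<Rightarrow> 'v \<Rightarrow> 'v \<Rightarrow> 'a \<Rightarrow> 'a \<Rightarrow> 'a \<Rightarrow> 'k::field mat" where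
  "twD Q w v \<alpha> \<gamma> b = mat (length (pb Q w (tgt Q b))) (length (ib Q v (src Q b)))
     (\<lambda>(i,j). if b = \<gamma> \<and> pb Q w (tgt Q b) ! i = Some \<gamma> \<and> ib Q v (src Q b) ! j = Some \<alpha> then 1 else 0)"

lemma twD_ok:
  assumes fq: "finite_quiver Q"
  shows "twist_ok Q (Prep Q w :: ('v,'a,'k::field) rep) (Irep Q v) (twD Q w v \<alpha> \<gamma>)"
  unfolding twist_ok_def
proof (intro conjI ballI impI)
  have fa: "finite (arrs Q)" using fq by (simp add: finite_quiver_def)
  have wf: "\<forall>b\<in>arrs Q. src Q b \<in> verts Q \<and> tgt Q b \<in> verts Q" by (rule fq_wf[OF fq])
  fix b assume b: "b \<in> arrs Q"
  show "twD Q w v \<alpha> \<gamma> b \<in> carrier_mat (fst (Prep Q w :: ('v,'a,'k) rep) (tgt Q b)) (fst (Irep Q v :: ('v,'a,'k) rep) (src Q b))"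
    using wf b by (simp add: twD_def Prep_dim Irep_dim)
  fix c assume c: "c \<in> arrs Q" and bc: "tgt Q b = src Q c"
  have t: "tgt Q c \<in> verts Q" and s: "src Q b \<in> verts Q" and m: "src Q c \<in> verts Q" using wf b c by auto
  have z1: "snd (Prep Q w :: ('v,'a,'k) rep) c * twD Q w v \<alpha> \<gamma> b = 0\<^sub>m (length (pb Q w (tgt Q c))) (length (ib Q v (src Q b)))"
  proof (rule mult_zero_entries[OF Prep_carrier[OF c]])
    show "twD Q w v \<alpha> \<gamma> b \<in> carrier_mat (length (pb Q w (src Q c))) (length (ib Q v (src Q b)))"
      using bc by (simp add: twD_def)
    fix i j k assume i: "i < length (pb Q w (tgt Q c))" and j: "j < length (ib Q v (src Q b))" and k: "k < length (pb Q w (src Q c))"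
    show "snd (Prep Q w :: ('v,'a,'k) rep) c $$ (i, k) * twD Q w v \<alpha> \<gamma> b $$ (k, j) = 0"
      using i j k bc by (simp add: Prep_entry twD_def)
  qed
  have z2: "twD Q w v \<alpha> \<gamma> c * snd (Irep Q v :: ('v,'a,'k) rep) b = 0\<^sub>m (length (pb Q w (tgt Q c))) (length (ib Q v (src Q b)))"
  proof (rule mult_zero_entries[OF _ Irep_carrier[OF b]])
    show "twD Q w v \<alpha> \<gamma> c \<in> carrier_mat (length (pb Q w (tgt Q c))) (length (ib Q v (tgt Q b)))"
      using bc by (simp add: twD_def)
    fix i j k assume i: "i < length (pb Q w (tgt Q c))" and j: "j < length (ib Q v (src Q b))" and k: "k < length (ib Q v (tgt Q b))"
    show "twD Q w v \<alpha> \<gamma> c $$ (i, k) * snd (Irep Q v :: ('v,'a,'k) rep) b $$ (k, j) = 0"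
      using i j k bc by (simp add: Irep_entry twD_def)
  qed
  show "snd (Prep Q w :: ('v,'a,'k) rep) c * twD Q w v \<alpha> \<gamma> b + twD Q w v \<alpha> \<gamma> c * snd (Irep Q v :: ('v,'a,'k) rep) b =
          0\<^sub>m (fst (Prep Q w :: ('v,'a,'k) rep) (tgt Q c)) (fst (Irep Q v :: ('v,'a,'k) rep) (src Q b))"
    unfolding z1 z2 using t s by (simp add: Prep_dim Irep_dim)
qed

lemma tw_entry:
  assumes fq: "finite_quiver Q" and b: "b \<in> arrs Q"
    and i: "i < length (pb Q w (tgt Q b)) + length (ib Q v (tgt Q b))"
    and j: "j < length (pb Q w (src Q b)) + length (ib Q v (src Q b))"
  shows "snd (tw (Prep Q w :: ('v,'a,'k::field) rep) (Irep Q v) D) b $$ (i, j) =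
    (if i < length (pb Q w (tgt Q b)) then
       (if j < length (pb Q w (src Q b)) then snd (Prep Q w :: ('v,'a,'k) rep) b $$ (i, j) else D b $$ (i, j - length (pb Q w (src Q b))))
     else (if j < length (pb Q w (src Q b)) then 0 else snd (Irep Q v :: ('v,'a,'k) rep) b $$ (i - length (pb Q w (tgt Q b)), j - length (pb Q w (src Q b)))))"
proof -
  have cP: "snd (Prep Q w :: ('v,'a,'k) rep) b \<in> carrier_mat (length (pb Q w (tgt Q b))) (length (pb Q w (src Q b)))"
    by (rule Prep_carrier[OF b])
  have cI: "snd (Irep Q v :: ('v,'a,'k) rep) b \<in> carrier_mat (length (ib Q v (tgt Q b))) (length (ib Q v (src Q b)))"
    by (rule Irep_carrier[OF b])
  show ?thesis using i j cP cI by (simp add: tw_def)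
qed

lemma no_retr:
  fixes Q :: "('v,'a) quiver"
  assumes fq: "finite_quiver Q" and \<alpha>: "\<alpha> \<in> arrs Q" and \<beta>: "\<beta> \<in> arrs Q" and \<gamma>: "\<gamma> \<in> arrs Q"
    and ab: "\<alpha> \<noteq> \<beta>" and tab: "tgt Q \<alpha> = tgt Q \<beta>" and ag: "\<alpha> \<noteq> \<gamma>" and sag: "src Q \<alpha> = src Q \<gamma>"
  shows "\<not> has_retr Q (Prep Q (src Q \<alpha>) :: ('v,'a,'k::field) rep)
           (ext1 (Prep Q (src Q \<alpha>)) (Irep Q (tgt Q \<alpha>)) (twD Q (src Q \<alpha>) (tgt Q \<alpha>) \<alpha> \<gamma>))"
proof
  define w1 where "w1 = src Q \<alpha>"
  define v where "v = tgt Q \<alpha>"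
  define u where "u = tgt Q \<gamma>"
  define w2 where "w2 = src Q \<beta>"
  define P where "P = (Prep Q w1 :: ('v,'a,'k) rep)"
  define I where "I = (Irep Q v :: ('v,'a,'k) rep)"
  define D where "D = (twD Q w1 v \<alpha> \<gamma> :: 'a \<Rightarrow> 'k mat)"
  define T where "T = tw P I D"
  have fa: "finite (arrs Q)" using fq by (simp add: finite_quiver_def)
  have wf: "\<forall>b\<in>arrs Q. src Q b \<in> verts Q \<and> tgt Q b \<in> verts Q" by (rule fq_wf[OF fq])
  have vs: "w1 \<in> verts Q" "v \<in> verts Q" "u \<in> verts Q" "w2 \<in> verts Q"
    using wf \<alpha> \<beta> \<gamma> by (auto simp: w1_def v_def u_def w2_def)
  have sg: "src Q \<gamma> = w1" and ta: "tgt Q \<alpha> = v" and sa: "src Q \<alpha> = w1" and tb: "tgt Q \<beta> = v"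
    and tg: "tgt Q \<gamma> = u" and sb: "src Q \<beta> = w2"
    using sag tab by (auto simp: w1_def v_def u_def w2_def)
  let ?nP = "\<lambda>z. length (pb Q w1 z)"
  let ?nI = "\<lambda>z. length (ib Q v z)"
  assume "has_retr Q (Prep Q (src Q \<alpha>) :: ('v,'a,'k) rep) (ext1 (Prep Q (src Q \<alpha>)) (Irep Q (tgt Q \<alpha>)) (twD Q (src Q \<alpha>) (tgt Q \<alpha>) \<alpha> \<gamma>))"
  then obtain \<rho> where \<rho>: "is_hom Q T P \<rho>" and \<rho>i: "\<forall>z\<in>verts Q. \<rho> z * iota (fst P z) (fst I z) = 1\<^sub>m (fst P z)"
    unfolding has_retr_def ext1_def T_def P_def I_def D_def w1_def v_def by auto
  have dT: "fst T z = fst P z + fst I z" for z by (simp add: T_def tw_def)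
  have c\<rho>: "\<rho> z \<in> carrier_mat (?nP z) (?nP z + ?nI z)" if z: "z \<in> verts Q" for z
    using hom_carrier[OF \<rho> z] dT[of z] z by (simp add: P_def I_def Prep_dim Irep_dim)
  have \<rho>id: "\<rho> z $$ (i, j) = (if i = j then 1 else 0)" if z: "z \<in> verts Q" and i: "i < ?nP z" and j: "j < ?nP z" for z i j
  proof -
    have "\<rho> z $$ (i, j) = (\<rho> z * iota (?nP z) (?nI z)) $$ (i, j)"
      by (rule mult_iota_right[OF c\<rho>[OF z] i j, symmetric])
    also have "\<dots> = (1\<^sub>m (?nP z) :: 'k mat) $$ (i, j)" using \<rho>i z by (simp add: P_def I_def Prep_dim Irep_dim)
    finally show ?thesis using i j by simp
  qed
  have cT: "snd T b \<in> carrier_mat (?nP (tgt Q b) + ?nI (tgt Q b)) (?nP (src Q b) + ?nI (src Q b))" if b: "b \<in> arrs Q" for b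
  proof -
    have cP': "snd P b \<in> carrier_mat (?nP (tgt Q b)) (?nP (src Q b))" unfolding P_def by (rule Prep_carrier[OF b])
    have cI': "snd I b \<in> carrier_mat (?nI (tgt Q b)) (?nI (src Q b))" unfolding I_def by (rule Irep_carrier[OF b])
    show ?thesis using cP' cI' by (simp add: T_def tw_def)
  qed
  have Tent: "snd T b $$ (i, j) =
    (if i < ?nP (tgt Q b) then (if j < ?nP (src Q b) then snd P b $$ (i, j) else D b $$ (i, j - ?nP (src Q b)))
     else (if j < ?nP (src Q b) then 0 else snd I b $$ (i - ?nP (tgt Q b), j - ?nP (src Q b))))"
    if b: "b \<in> arrs Q" and i: "i < ?nP (tgt Q b) + ?nI (tgt Q b)" and j: "j < ?nP (src Q b) + ?nI (src Q b)" for b i j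
    unfolding T_def P_def I_def by (rule tw_entry[OF fq b i j])
  have pb0: "m < ?nP w1 \<Longrightarrow> pb Q w1 w1 ! m = None \<longleftrightarrow> m = 0" for m
    using pb_nth_None[OF fa, of m w1 w1] pb_0[of Q w1] by auto
  have ib0: "m < ?nI v \<Longrightarrow> ib Q v v ! m = None \<longleftrightarrow> m = 0" for m
    using ib_nth_None[OF fa, of m v v] ib_0[of Q v] by auto
  have l0: "0 < ?nP w1" "0 < ?nI v" by (rule pb_0(2), rule ib_0(2))
  have "Some \<gamma> \<in> set (pb Q w1 u)" using pb_Some[OF fa] \<gamma> sg tg by simp
  then obtain k\<gamma> where k\<gamma>: "k\<gamma> < ?nP u" "pb Q w1 u ! k\<gamma> = Some \<gamma>"
    and k\<gamma>u: "\<And>m. m < ?nP u \<Longrightarrow> pb Q w1 u ! m = Some \<gamma> \<longleftrightarrow> m = k\<gamma>"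
    by (rule unique_idx[OF pb_distinct[OF fa]]) blast
  have "Some \<alpha> \<in> set (pb Q w1 v)" using pb_Some[OF fa] \<alpha> sa ta by simp
  then obtain k\<alpha> where k\<alpha>: "k\<alpha> < ?nP v" "pb Q w1 v ! k\<alpha> = Some \<alpha>"
    by (auto simp: in_set_conv_nth)
  have "Some \<alpha> \<in> set (ib Q v w1)" using ib_Some[OF fa] \<alpha> sa ta by simp
  then obtain c\<alpha> where c\<alpha>: "c\<alpha> < ?nI w1" "ib Q v w1 ! c\<alpha> = Some \<alpha>"
    by (auto simp: in_set_conv_nth)
  have "Some \<beta> \<in> set (ib Q v w2)" using ib_Some[OF fa] \<beta> sb tb by simp
  then obtain c\<beta> where c\<beta>: "c\<beta> < ?nI w2" "ib Q v w2 ! c\<beta> = Some \<beta>"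
    by (auto simp: in_set_conv_nth)
  have E1: "\<rho> w1 $$ (0, ?nP w1 + c\<alpha>) = 1"
  proof -
    have cTg: "snd T \<gamma> \<in> carrier_mat (?nP u + ?nI u) (?nP w1 + ?nI w1)" using cT[OF \<gamma>] sg tg by simp
    have cPg: "snd P \<gamma> \<in> carrier_mat (?nP u) (?nP w1)" using Prep_carrier[OF \<gamma>, of w1, where 'k='k] sg tg by (simp add: P_def)
    have j: "?nP w1 + c\<alpha> < ?nP w1 + ?nI w1" using c\<alpha> by simp
    have "(\<rho> u * snd T \<gamma>) $$ (k\<gamma>, ?nP w1 + c\<alpha>) = \<rho> u $$ (k\<gamma>, k\<gamma>)"
    proof (rule mult_col_unit[OF c\<rho>[OF vs(3)] cTg k\<gamma>(1) j])
      show "k\<gamma> < ?nP u + ?nI u" using k\<gamma> by simp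
      fix m assume m: "m < ?nP u + ?nI u"
      show "snd T \<gamma> $$ (m, ?nP w1 + c\<alpha>) = (if m = k\<gamma> then 1 else 0)"
      proof (cases "m < ?nP u")
        case True
        thus ?thesis using Tent[OF \<gamma>, of m "?nP w1 + c\<alpha>"] m j sg tg c\<alpha> k\<gamma>u[OF True]
          by (simp add: D_def twD_def)
      next
        case False
        have "ib Q v w1 ! c\<alpha> \<noteq> Some \<gamma>" using c\<alpha> ag by simp
        thus ?thesis using Tent[OF \<gamma>, of m "?nP w1 + c\<alpha>"] m j sg tg False k\<gamma> c\<alpha>
          by (simp add: I_def Irep_entry)
      qed
    qed
    also have "\<dots> = 1" using \<rho>id[OF vs(3) k\<gamma>(1) k\<gamma>(1)] by simp
    finally have l: "(\<rho> u * snd T \<gamma>) $$ (k\<gamma>, ?nP w1 + c\<alpha>) = 1" .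
    have "(snd P \<gamma> * \<rho> w1) $$ (k\<gamma>, ?nP w1 + c\<alpha>) = \<rho> w1 $$ (0, ?nP w1 + c\<alpha>)"
    proof (rule mult_row_unit[OF cPg c\<rho>[OF vs(1)] k\<gamma>(1) j l0(1)])
      fix m assume m: "m < ?nP w1"
      show "snd P \<gamma> $$ (k\<gamma>, m) = (if m = 0 then 1 else 0)"
        using m k\<gamma> pb0[OF m] sg tg by (simp add: P_def Prep_entry)
    qed
    moreover have "\<rho> u * snd T \<gamma> = snd P \<gamma> * \<rho> w1" using hom_comm[OF \<rho> \<gamma>] sg tg by simp
    ultimately show ?thesis using l by simp
  qed
  have E2: "\<rho> v $$ (k\<alpha>, ?nP v) = 1"
  proof -
    have cTa: "snd T \<alpha> \<in> carrier_mat (?nP v + ?nI v) (?nP w1 + ?nI w1)" using cT[OF \<alpha>] sa ta by simp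
    have cPa: "snd P \<alpha> \<in> carrier_mat (?nP v) (?nP w1)" using Prep_carrier[OF \<alpha>, of w1, where 'k='k] sa ta by (simp add: P_def)
    have j: "?nP w1 + c\<alpha> < ?nP w1 + ?nI w1" using c\<alpha> by simp
    have "(\<rho> v * snd T \<alpha>) $$ (k\<alpha>, ?nP w1 + c\<alpha>) = \<rho> v $$ (k\<alpha>, ?nP v)"
    proof (rule mult_col_unit[OF c\<rho>[OF vs(2)] cTa k\<alpha>(1) j])
      show "?nP v < ?nP v + ?nI v" using l0 by simp
      fix m assume m: "m < ?nP v + ?nI v"
      show "snd T \<alpha> $$ (m, ?nP w1 + c\<alpha>) = (if m = ?nP v then 1 else 0)"
      proof (cases "m < ?nP v")
        case True
        thus ?thesis using Tent[OF \<alpha>, of m "?nP w1 + c\<alpha>"] m j sa ta ag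
          by (simp add: D_def twD_def)
      next
        case False
        hence m': "m - ?nP v < ?nI v" using m by simp
        have "ib Q v v ! (m - ?nP v) = None \<longleftrightarrow> m = ?nP v" using ib0[OF m'] False by auto
        thus ?thesis using Tent[OF \<alpha>, of m "?nP w1 + c\<alpha>"] m j sa ta False c\<alpha>
          by (simp add: I_def Irep_entry)
      qed
    qed
    moreover have "(snd P \<alpha> * \<rho> w1) $$ (k\<alpha>, ?nP w1 + c\<alpha>) = \<rho> w1 $$ (0, ?nP w1 + c\<alpha>)"
    proof (rule mult_row_unit[OF cPa c\<rho>[OF vs(1)] k\<alpha>(1) j l0(1)])
      fix m assume m: "m < ?nP w1"
      show "snd P \<alpha> $$ (k\<alpha>, m) = (if m = 0 then 1 else 0)"
        using m k\<alpha> pb0[OF m] sa ta by (simp add: P_def Prep_entry)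
    qed
    moreover have "\<rho> v * snd T \<alpha> = snd P \<alpha> * \<rho> w1" using hom_comm[OF \<rho> \<alpha>] sa ta by simp
    ultimately show ?thesis using E1 by simp
  qed
  have E3: "\<rho> v $$ (k\<alpha>, ?nP v) = 0"
  proof -
    have cTb: "snd T \<beta> \<in> carrier_mat (?nP v + ?nI v) (?nP w2 + ?nI w2)" using cT[OF \<beta>] sb tb by simp
    have cPb: "snd P \<beta> \<in> carrier_mat (?nP v) (?nP w2)" using Prep_carrier[OF \<beta>, of w1, where 'k='k] sb tb by (simp add: P_def)
    have j: "?nP w2 + c\<beta> < ?nP w2 + ?nI w2" using c\<beta> by simp
    have "(\<rho> v * snd T \<beta>) $$ (k\<alpha>, ?nP w2 + c\<beta>) = \<rho> v $$ (k\<alpha>, ?nP v)"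
    proof (rule mult_col_unit[OF c\<rho>[OF vs(2)] cTb k\<alpha>(1) j])
      show "?nP v < ?nP v + ?nI v" using l0 by simp
      fix m assume m: "m < ?nP v + ?nI v"
      show "snd T \<beta> $$ (m, ?nP w2 + c\<beta>) = (if m = ?nP v then 1 else 0)"
      proof (cases "m < ?nP v")
        case True
        have "ib Q v w2 ! c\<beta> \<noteq> Some \<alpha>" using c\<beta> ab by simp
        thus ?thesis using Tent[OF \<beta>, of m "?nP w2 + c\<beta>"] m j sb tb True
          by (simp add: D_def twD_def)
      next
        case False
        hence m': "m - ?nP v < ?nI v" using m by simp
        have "ib Q v v ! (m - ?nP v) = None \<longleftrightarrow> m = ?nP v" using ib0[OF m'] False by auto
        thus ?thesis using Tent[OF \<beta>, of m "?nP w2 + c\<beta>"] m j sb tb False c\<beta>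
          by (simp add: I_def Irep_entry)
      qed
    qed
    moreover have "(snd P \<beta> * \<rho> w2) $$ (k\<alpha>, ?nP w2 + c\<beta>) = 0"
    proof (rule mult_row_zero[OF cPb c\<rho>[OF vs(4)] k\<alpha>(1) j])
      fix m assume m: "m < ?nP w2"
      show "snd P \<beta> $$ (k\<alpha>, m) = 0"
        using m k\<alpha> sb tb ab by (simp add: P_def Prep_entry)
    qed
    moreover have "\<rho> v * snd T \<beta> = snd P \<beta> * \<rho> w2" using hom_comm[OF \<rho> \<beta>] sb tb by simp
    ultimately show ?thesis by simp
  qed
  show False using E2 E3 by simp
qed


lemma core:
  fixes Q :: "('v, 'a) quiver" and n :: nat
    and \<C> :: "('v, 'a, 'k::field) rep \<Rightarrow> bool"
  assumes fq: "finite_quiver Q" and n: "n \<ge> 2" and ct: "n_cluster_tilting Q n \<C>"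
    and \<alpha>: "\<alpha> \<in> arrs Q" and \<beta>: "\<beta> \<in> arrs Q" and \<gamma>: "\<gamma> \<in> arrs Q"
    and ab: "\<alpha> \<noteq> \<beta>" and tab: "tgt Q \<alpha> = tgt Q \<beta>" and ag: "\<alpha> \<noteq> \<gamma>" and sag: "src Q \<alpha> = src Q \<gamma>"
  shows False
proof -
  define P where "P = (Prep Q (src Q \<alpha>) :: ('v,'a,'k) rep)"
  define I where "I = (Irep Q (tgt Q \<alpha>) :: ('v,'a,'k) rep)"
  define D where "D = (twD Q (src Q \<alpha>) (tgt Q \<alpha>) \<alpha> \<gamma> :: 'a \<Rightarrow> 'k mat)"
  have wf: "\<forall>b\<in>arrs Q. src Q b \<in> verts Q \<and> tgt Q b \<in> verts Q" by (rule fq_wf[OF fq])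
  have sv: "src Q \<alpha> \<in> verts Q" and tv: "tgt Q \<alpha> \<in> verts Q" using wf \<alpha> by auto
  have Prep': "is_rep Q P" unfolding P_def by (rule Prep_rep[OF fq])
  have Irep': "is_rep Q I" unfolding I_def by (rule Irep_rep[OF fq])
  have c3: "\<And>X. is_rep Q X \<Longrightarrow> (\<C> X \<longleftrightarrow> (\<forall>i. 0 < i \<and> i < n \<longrightarrow> (\<forall>C. \<C> C \<longrightarrow> ext_vanishes Q i X C)))"
    using ct unfolding n_cluster_tilting_def by blast
  have c4: "\<And>X. is_rep Q X \<Longrightarrow> (\<C> X \<longleftrightarrow> (\<forall>i. 0 < i \<and> i < n \<longrightarrow> (\<forall>C. \<C> C \<longrightarrow> ext_vanishes Q i C X)))"
    using ct unfolding n_cluster_tilting_def by blast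
  have CP: "\<C> P"
  proof (subst c3[OF Prep'], intro allI impI)
    fix i C assume i: "0 < i \<and> i < n" and "\<C> C"
    show "ext_vanishes Q i P C" unfolding P_def by (rule proj_vanishes[OF Prep_proj_like[OF fq sv] wf]) (use i in simp)
  qed
  have CI: "\<C> I"
  proof (subst c4[OF Irep'], intro allI impI)
    fix i C assume i: "0 < i \<and> i < n" and "\<C> C"
    show "ext_vanishes Q i C I" unfolding I_def by (rule inj_vanishes[OF Irep_inj_like[OF fq tv] wf]) (use i in simp)
  qed
  have allI': "\<forall>i. 0 < i \<and> i < n \<longrightarrow> (\<forall>C. \<C> C \<longrightarrow> ext_vanishes Q i I C)" using c3[OF Irep'] CI by blast
  have "0 < (1::nat) \<and> 1 < n" using n by simp
  hence EV: "ext_vanishes Q 1 I P" using allI'[rule_format, of 1 P] CP by blast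
  have e: "is_ext Q 1 I P (ext1 P I D)"
    unfolding P_def I_def D_def by (rule ext1_is_ext[OF Prep_rep[OF fq] Irep_rep[OF fq] twD_ok[OF fq]])
  have ye: "yoneda_equiv Q 1 I P (ext1 P I D) (trivial_ext 1 I P)"
    using EV e unfolding ext_vanishes_def by blast
  have "has_retr Q P (ext1 P I D)"
    using yoneda_retr[OF wf ye] triv_has_retr[OF wf Prep' Irep'] by blast
  thus False using no_retr[OF fq \<alpha> \<beta> \<gamma> ab tab ag sag] unfolding P_def I_def D_def by blast
qed

lemma card_ne_1:
  assumes "finite S" "a \<in> S" "card S \<noteq> 1"
  shows "\<exists>b\<in>S. b \<noteq> a"
proof (rule ccontr)
  assume "\<not> ?thesis"
  hence "S = {a}" using assms(2) by blast
  thus False using assms(3) by simp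
qed

theorem lemma2p4:
  fixes Q :: "('v, 'a) quiver" and n :: nat
    and \<C> :: "('v, 'a, 'k::field) rep \<Rightarrow> bool"
  assumes "finite_quiver Q" and "connected_quiver Q" and "n \<ge> 2"
    and "n_cluster_tilting Q n \<C>"
  shows "(\<forall>\<alpha>\<in>arrs Q. \<forall>\<beta>\<in>arrs Q. \<alpha> \<noteq> \<beta> \<and> tgt Q \<alpha> = tgt Q \<beta> \<longrightarrow>
            out_deg Q (src Q \<alpha>) = 1 \<and> out_deg Q (src Q \<beta>) = 1) \<and>
         (\<forall>\<alpha>\<in>arrs Q. \<forall>\<beta>\<in>arrs Q. \<alpha> \<noteq> \<beta> \<and> src Q \<alpha> = src Q \<beta> \<longrightarrow>
            in_deg Q (tgt Q \<alpha>) = 1 \<and> in_deg Q (tgt Q \<beta>) = 1)"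
proof -
  note fq = assms(1) and n = assms(3) and ct = assms(4)
  have fa: "finite (arrs Q)" using fq by (simp add: finite_quiver_def)
  have outd: "out_deg Q (src Q a) = 1" if a: "a \<in> arrs Q" and b: "b \<in> arrs Q" and ab: "a \<noteq> b" and t: "tgt Q a = tgt Q b" for a b
  proof (rule ccontr)
    assume ne: "out_deg Q (src Q a) \<noteq> 1"
    obtain c where c: "c \<in> {x \<in> arrs Q. src Q x = src Q a}" "c \<noteq> a"
      using card_ne_1[of "{x \<in> arrs Q. src Q x = src Q a}" a] ne fa a unfolding out_deg_def by auto
    show False using core[OF fq n ct a b, of c] c ab t by auto
  qed
  have ind: "in_deg Q (tgt Q a) = 1" if a: "a \<in> arrs Q" and b: "b \<in> arrs Q" and ab: "a \<noteq> b" and s: "src Q a = src Q b" for a b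
  proof (rule ccontr)
    assume ne: "in_deg Q (tgt Q a) \<noteq> 1"
    obtain c where c: "c \<in> {x \<in> arrs Q. tgt Q x = tgt Q a}" "c \<noteq> a"
      using card_ne_1[of "{x \<in> arrs Q. tgt Q x = tgt Q a}" a] ne fa a unfolding in_deg_def by auto
    show False using core[OF fq n ct a _ b, of c] c ab s by auto
  qed
  show ?thesis
  proof (intro conjI ballI impI)
    fix a b assume a: "a \<in> arrs Q" and b: "b \<in> arrs Q" and h: "a \<noteq> b \<and> tgt Q a = tgt Q b"
    show "out_deg Q (src Q a) = 1" using outd[OF a b] h by auto
    show "out_deg Q (src Q b) = 1" using outd[OF b a] h by auto
  next
    fix a b assume a: "a \<in> arrs Q" and b: "b \<in> arrs Q" and h: "a \<noteq> b \<and> src Q a = src Q b"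
    show "in_deg Q (tgt Q a) = 1" using ind[OF a b] h by auto
    show "in_deg Q (tgt Q b) = 1" using ind[OF b a] h by auto
  qed
qed


end
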